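(* Assume (A1)–(A3) and let $\bar u_{\bar e}\in S(\bar e)$. Then for every $u^*\in L^2(\Omega)$, $D^*\mathcal G(\bar e,\bar u_{\bar e})(u^* )=\widehat D^*\mathcal G(\bar e,\bar u_{\bar e})(u^* )=\{e^*\in E^*: e^*=(0,0,e^*_\alpha,e^*_\beta),\ u^*=u^*_1-u^*_2,\ u^*_1=e^*_\alpha+e^*_\beta,\ u^*_2\in N(\bar u_{\bar e};\mathcal Q),\ e^*_\alpha\ge0\text{ on }\Omega_1(\bar e,\bar u_{\bar e}),\ e^*_\alpha=0\text{ on }\Omega\setminus\Omega_1(\bar e,\bar u_{\bar e}),\ e^*_\beta\le0\text{ on }\Omega_3(\bar e,\bar u_{\bar e}),\ e^*_\beta=0\text{ on }\Omega\setminus\Omega_3(\bar e,\bar u_{\bar e})\}$.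
   Context: Let $\Omega\subset\mathbb R^N$, $N\in\{1,2,3\}$; $\alpha,\beta\in L^\infty(\Omega)$, $\alpha\le\beta$, $\alpha\not\equiv\beta$; $\zeta\in L^2(\Omega)$, $\zeta\ge0$. $Ay=-\sum_{i,j}\partial_{x_j}(a_{ij}\partial_{x_i}y)$. $L,f$ Carathéodory, $C^2$ in $y$, with (A1) $f(\cdot,0)\in L^{\bar p}$, $\bar p>N/2$, $\partial f/\partial y\ge0$, $|\partial f/\partial y|+|\partial^2f/\partial y^2|\le C_{f,M}$ for $|y|\le M$, $\partial^2f/\partial y^2(x,\cdot)$ uniformly continuous on $[-M,M]$ uniformly in $x$; (A2) $L(\cdot,0)\in L^1$, $|\partial L/\partial y|\le\psi_M\in L^{\bar p}$, $|\partial^2L/\partial y^2|\le C_{L,M}$ for $|y|\le M$, $\partial^2L/\partial y^2(x,\cdot)$ uniformly continuous likewise; (A3) $\Omega$ open bounded with Lipschitz boundary $\Gamma$, $\mathcal Q\subset L^2(\Omega)$ closed convex bounded with $\mathcal U_{ad}(e)\cap\operatorname{int}\mathcal Q\ne\emptyset$ for some $e$, $a_{ij}\in C(\bar\Omega)$ uniformly elliptic. $y_u$ solves $Ay+f(x,y)=u$, $y=0$ on $\Gamma$; $J(u)=\int_\Omega L(x,y_u)+\frac12\int_\Omega\zeta u^2$. $E=L^2(\Omega)^4$, $e=(e_y,e_J,e_\alpha,e_\beta)$; $\mathcal U_{ad}(e)=\{u\in L^2:\alpha+e_\alpha\le u\le\beta+e_\beta\text{ a.e.}\}$, $\mathcal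 G(e)=\mathcal U_{ad}(e)\cap\mathcal Q$; $\mathcal J(u,e)=J(u+e_y)+(e_J,y_{u+e_y})_{L^2}$; $\mu(e)=\inf_{u\in\mathcal G(e)}\mathcal J(u,e)$; $S(e)=\{u\in\mathcal G(e):\mathcal J(u,e)=\mu(e)\}$. $\Omega_1(e,u)=\{u=\alpha+e_\alpha\}$, $\Omega_3(e,u)=\{u=\beta+e_\beta\}$. $N(\cdot;\mathcal Q)$ is the convex normal cone. $\widehat D^*$ and $D^*$ are the regular (Fréchet) and Mordukhovich (limiting) coderivatives: $e^*\in\widehat D^*\mathcal G(\bar e,\bar u)(u^* )$ iff $(e^*,-u^* )\in\widehat N((\bar e,\bar u);\operatorname{gph}\mathcal G)$, and $e^*\in D^*\mathcal G(\bar e,\bar u)(u^* )$ iff $(e^*,-u^* )\in N((\bar e,\bar u);\operatorname{gph}\mathcal G)$, the limiting normal cone. *)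

theory Defs
  imports "HOL-Analysis.Analysis"
begin

section \<open>Function spaces on a domain \<Omega> (elements represented by functions, equality a.e.)\<close>

abbreviation M :: "'a::euclidean_space set \<Rightarrow> 'a measure" where
  "M \<Omega> \<equiv> lebesgue_on \<Omega>"

definition L2 :: "'a::euclidean_space set \<Rightarrow> ('a \<Rightarrow> real) set" where
  "L2 \<Omega> = {u. u \<in> borel_measurable (M \<Omega>) \<and> integrable (M \<Omega>) (\<lambda>x. (u x)\<^sup>2)}"

definition Lp :: "real \<Rightarrow> 'a::euclidean_space set \<Rightarrow> ('a \<Rightarrow> real) set" where
  "Lp p \<Omega> = {u. u \<in> borel_measurable (M \<Omega>) \<and> integrable (M \<Omega>) (\<lambda>x. \<bar>u x\<bar> powr p)}"

definition Linf :: "'a::euclidean_space set \<Rightarrow> ('a \<Rightarrow> real) set" where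
  "Linf \<Omega> = {u. u \<in> borel_measurable (M \<Omega>) \<and> (\<exists>C. AE x in M \<Omega>. \<bar>u x\<bar> \<le> C)}"

definition L2_inner :: "'a::euclidean_space set \<Rightarrow> ('a \<Rightarrow> real) \<Rightarrow> ('a \<Rightarrow> real) \<Rightarrow> real" where
  "L2_inner \<Omega> u v = integral\<^sup>L (M \<Omega>) (\<lambda>x. u x * v x)"

definition L2_norm :: "'a::euclidean_space set \<Rightarrow> ('a \<Rightarrow> real) \<Rightarrow> real" where
  "L2_norm \<Omega> u = sqrt (L2_inner \<Omega> u u)"

definition L2_interior :: "'a::euclidean_space set \<Rightarrow> ('a \<Rightarrow> real) set \<Rightarrow> ('a \<Rightarrow> real) set" where
  "L2_interior \<Omega> Q = {u \<in> L2 \<Omega>. \<exists>r>0. \<forall>v \<in> L2 \<Omega>. L2_norm \<Omega> (\<lambda>x. v x - u x) < r \<longrightarrow> v \<in> Q}"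

definition L2_closed :: "'a::euclidean_space set \<Rightarrow> ('a \<Rightarrow> real) set \<Rightarrow> bool" where
  "L2_closed \<Omega> Q \<longleftrightarrow> (\<forall>uk u. (\<forall>k. uk k \<in> Q) \<longrightarrow> u \<in> L2 \<Omega> \<longrightarrow>
      (\<lambda>k. L2_norm \<Omega> (\<lambda>x. uk k x - u x)) \<longlonglongrightarrow> 0 \<longrightarrow> u \<in> Q)"

definition L2_convex :: "('a \<Rightarrow> real) set \<Rightarrow> bool" where
  "L2_convex Q \<longleftrightarrow> (\<forall>u\<in>Q. \<forall>v\<in>Q. \<forall>t::real. 0 \<le> t \<and> t \<le> 1 \<longrightarrow> (\<lambda>x. (1 - t) * u x + t * v x) \<in> Q)"

definition L2_bounded :: "'a::euclidean_space set \<Rightarrow> ('a \<Rightarrow> real) set \<Rightarrow> bool" where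
  "L2_bounded \<Omega> Q \<longleftrightarrow> (\<exists>C. \<forall>u\<in>Q. L2_norm \<Omega> u \<le> C)"

definition conv_normal :: "'a::euclidean_space set \<Rightarrow> ('a \<Rightarrow> real) \<Rightarrow> ('a \<Rightarrow> real) set \<Rightarrow> ('a \<Rightarrow> real) set" where
  "conv_normal \<Omega> ub Q = (if ub \<in> Q then {v \<in> L2 \<Omega>. \<forall>u\<in>Q. L2_inner \<Omega> v (\<lambda>x. u x - ub x) \<le> 0} else {})"

definition lipschitz_boundary :: "'a::euclidean_space set \<Rightarrow> bool" where
  "lipschitz_boundary \<Omega> \<longleftrightarrow> (\<forall>x0 \<in> frontier \<Omega>. \<exists>r>0. \<exists>\<nu> h Lc.
     norm \<nu> = 1 \<and>
     (\<forall>y z. y \<bullet> \<nu> = 0 \<longrightarrow> z \<bullet> \<nu> = 0 \<longrightarrow> \<bar>h y - h z\<bar> \<le> Lc * norm (y - z)) \<and>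
     \<Omega> \<inter> ball x0 r = {y + t *\<^sub>R \<nu> | y t. y \<bullet> \<nu> = 0 \<and> t < h y} \<inter> ball x0 r)"

definition pd :: "'a::euclidean_space \<Rightarrow> ('a \<Rightarrow> real) \<Rightarrow> ('a \<Rightarrow> real)" where
  "pd i \<phi> = (\<lambda>x. frechet_derivative \<phi> (at x) i)"

primrec iter_pd :: "'a::euclidean_space list \<Rightarrow> ('a \<Rightarrow> real) \<Rightarrow> ('a \<Rightarrow> real)" where
  "iter_pd [] \<phi> = \<phi>"
| "iter_pd (i # is) \<phi> = pd i (iter_pd is \<phi>)"

definition smooth_fun :: "('a::euclidean_space \<Rightarrow> real) \<Rightarrow> bool" where
  "smooth_fun \<phi> \<longleftrightarrow> (\<forall>is. set is \<subseteq> Basis \<longrightarrow> (\<forall>x. iter_pd is \<phi> differentiable (at x)))"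

definition test_fun :: "'a::euclidean_space set \<Rightarrow> ('a \<Rightarrow> real) \<Rightarrow> bool" where
  "test_fun \<Omega> \<phi> \<longleftrightarrow> smooth_fun \<phi> \<and> compact (closure {x. \<phi> x \<noteq> 0}) \<and> closure {x. \<phi> x \<noteq> 0} \<subseteq> \<Omega>"

definition weak_grad :: "'a::euclidean_space set \<Rightarrow> ('a \<Rightarrow> real) \<Rightarrow> ('a \<Rightarrow> 'a \<Rightarrow> real) \<Rightarrow> bool" where
  "weak_grad \<Omega> y g \<longleftrightarrow> (\<forall>i\<in>Basis. \<forall>\<phi>. test_fun \<Omega> \<phi> \<longrightarrow>
      integral\<^sup>L (M \<Omega>) (\<lambda>x. y x * pd i \<phi> x) = - integral\<^sup>L (M \<Omega>) (\<lambda>x. g i x * \<phi> x))"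

definition H10 :: "'a::euclidean_space set \<Rightarrow> ('a \<Rightarrow> real) \<Rightarrow> ('a \<Rightarrow> 'a \<Rightarrow> real) \<Rightarrow> bool" where
  "H10 \<Omega> y g \<longleftrightarrow> y \<in> L2 \<Omega> \<and> (\<forall>i\<in>Basis. g i \<in> L2 \<Omega>) \<and> weak_grad \<Omega> y g \<and>
     (\<exists>\<phi>. (\<forall>k. test_fun \<Omega> (\<phi> k)) \<and>
        (\<lambda>k. L2_norm \<Omega> (\<lambda>x. \<phi> k x - y x)) \<longlonglongrightarrow> 0 \<and>
        (\<forall>i\<in>Basis. (\<lambda>k. L2_norm \<Omega> (\<lambda>x. pd i (\<phi> k) x - g i x)) \<longlonglongrightarrow> 0))"

text \<open>y solves  A y + f(x,y) = u in \<Omega>, y = 0 on \<Gamma>  (weak solution in H^1_0 \<inter> L^\<infinity>),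
  where A y = - \<Sum>_{i,j} \<partial>_{x_j}(a_ij \<partial>_{x_i} y).\<close>
definition is_state :: "'a::euclidean_space set \<Rightarrow> ('a \<Rightarrow> 'a \<Rightarrow> 'a \<Rightarrow> real) \<Rightarrow> ('a \<Rightarrow> real \<Rightarrow> real)
      \<Rightarrow> ('a \<Rightarrow> real) \<Rightarrow> ('a \<Rightarrow> real) \<Rightarrow> bool" where
  "is_state \<Omega> a f u y \<longleftrightarrow> y \<in> Linf \<Omega> \<and> (\<exists>g. H10 \<Omega> y g \<and>
     (\<forall>\<phi>. test_fun \<Omega> \<phi> \<longrightarrow>
        integral\<^sup>L (M \<Omega>) (\<lambda>x. (\<Sum>i\<in>Basis. \<Sum>j\<in>Basis. a i j x * g i x * pd j \<phi> x) + f x (y x) * \<phi> x)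
        = integral\<^sup>L (M \<Omega>) (\<lambda>x. u x * \<phi> x)))"

definition state :: "'a::euclidean_space set \<Rightarrow> ('a \<Rightarrow> 'a \<Rightarrow> 'a \<Rightarrow> real) \<Rightarrow> ('a \<Rightarrow> real \<Rightarrow> real)
      \<Rightarrow> ('a \<Rightarrow> real) \<Rightarrow> ('a \<Rightarrow> real)" where
  "state \<Omega> a f u = (SOME y. is_state \<Omega> a f u y)"

type_synonym 'a pert = "('a \<Rightarrow> real) \<times> ('a \<Rightarrow> real) \<times> ('a \<Rightarrow> real) \<times> ('a \<Rightarrow> real)"
  (* e = (e_y, e_J, e_alpha, e_beta) *)

definition Espace :: "'a::euclidean_space set \<Rightarrow> 'a pert set" where
  "Espace \<Omega> = {(ey, eJ, ea, eb). ey \<in> L2 \<Omega> \<and> eJ \<in> L2 \<Omega> \<and> ea \<in> L2 \<Omega> \<and> eb \<in> L2 \<Omega>}"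

definition Uad :: "'a::euclidean_space set \<Rightarrow> ('a \<Rightarrow> real) \<Rightarrow> ('a \<Rightarrow> real) \<Rightarrow> 'a pert \<Rightarrow> ('a \<Rightarrow> real) set" where
  "Uad \<Omega> \<alpha> \<beta> e = (case e of (ey, eJ, ea, eb) \<Rightarrow>
     {u \<in> L2 \<Omega>. AE x in M \<Omega>. \<alpha> x + ea x \<le> u x \<and> u x \<le> \<beta> x + eb x})"

definition Gmap :: "'a::euclidean_space set \<Rightarrow> ('a \<Rightarrow> real) \<Rightarrow> ('a \<Rightarrow> real) \<Rightarrow> ('a \<Rightarrow> real) set
     \<Rightarrow> 'a pert \<Rightarrow> ('a \<Rightarrow> real) set" where
  "Gmap \<Omega> \<alpha> \<beta> Q e = Uad \<Omega> \<alpha> \<beta> e \<inter> Q"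

definition Jfun :: "'a::euclidean_space set \<Rightarrow> ('a \<Rightarrow> 'a \<Rightarrow> 'a \<Rightarrow> real) \<Rightarrow> ('a \<Rightarrow> real \<Rightarrow> real)
   \<Rightarrow> ('a \<Rightarrow> real \<Rightarrow> real) \<Rightarrow> ('a \<Rightarrow> real) \<Rightarrow> ('a \<Rightarrow> real) \<Rightarrow> real" where
  "Jfun \<Omega> a f L \<zeta> u = integral\<^sup>L (M \<Omega>) (\<lambda>x. L x (state \<Omega> a f u x))
      + 1/2 * integral\<^sup>L (M \<Omega>) (\<lambda>x. \<zeta> x * (u x)\<^sup>2)"

definition Jpert :: "'a::euclidean_space set \<Rightarrow> ('a \<Rightarrow> 'a \<Rightarrow> 'a \<Rightarrow> real) \<Rightarrow> ('a \<Rightarrow> real \<Rightarrow> real)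
   \<Rightarrow> ('a \<Rightarrow> real \<Rightarrow> real) \<Rightarrow> ('a \<Rightarrow> real) \<Rightarrow> ('a \<Rightarrow> real) \<Rightarrow> 'a pert \<Rightarrow> real" where
  "Jpert \<Omega> a f L \<zeta> u e = (case e of (ey, eJ, ea, eb) \<Rightarrow>
      Jfun \<Omega> a f L \<zeta> (\<lambda>x. u x + ey x) + L2_inner \<Omega> eJ (state \<Omega> a f (\<lambda>x. u x + ey x)))"

definition mu :: "'a::euclidean_space set \<Rightarrow> ('a \<Rightarrow> 'a \<Rightarrow> 'a \<Rightarrow> real) \<Rightarrow> ('a \<Rightarrow> real \<Rightarrow> real)
   \<Rightarrow> ('a \<Rightarrow> real \<Rightarrow> real) \<Rightarrow> ('a \<Rightarrow> real) \<Rightarrow> ('a \<Rightarrow> real) \<Rightarrow> ('a \<Rightarrow> real) \<Rightarrow> ('a \<Rightarrow> real) set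
   \<Rightarrow> 'a pert \<Rightarrow> real" where
  "mu \<Omega> a f L \<zeta> \<alpha> \<beta> Q e = (INF u \<in> Gmap \<Omega> \<alpha> \<beta> Q e. Jpert \<Omega> a f L \<zeta> u e)"

definition Sol :: "'a::euclidean_space set \<Rightarrow> ('a \<Rightarrow> 'a \<Rightarrow> 'a \<Rightarrow> real) \<Rightarrow> ('a \<Rightarrow> real \<Rightarrow> real)
   \<Rightarrow> ('a \<Rightarrow> real \<Rightarrow> real) \<Rightarrow> ('a \<Rightarrow> real) \<Rightarrow> ('a \<Rightarrow> real) \<Rightarrow> ('a \<Rightarrow> real) \<Rightarrow> ('a \<Rightarrow> real) set
   \<Rightarrow> 'a pert \<Rightarrow> ('a \<Rightarrow> real) set" where
  "Sol \<Omega> a f L \<zeta> \<alpha> \<beta> Q e =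
     {u \<in> Gmap \<Omega> \<alpha> \<beta> Q e. Jpert \<Omega> a f L \<zeta> u e = mu \<Omega> a f L \<zeta> \<alpha> \<beta> Q e}"

definition Omega1 :: "'a::euclidean_space set \<Rightarrow> ('a \<Rightarrow> real) \<Rightarrow> 'a pert \<Rightarrow> ('a \<Rightarrow> real) \<Rightarrow> 'a set" where
  "Omega1 \<Omega> \<alpha> e u = (case e of (ey, eJ, ea, eb) \<Rightarrow> {x \<in> \<Omega>. u x = \<alpha> x + ea x})"

definition Omega3 :: "'a::euclidean_space set \<Rightarrow> ('a \<Rightarrow> real) \<Rightarrow> 'a pert \<Rightarrow> ('a \<Rightarrow> real) \<Rightarrow> 'a set" where
  "Omega3 \<Omega> \<beta> e u = (case e of (ey, eJ, ea, eb) \<Rightarrow> {x \<in> \<Omega>. u x = \<beta> x + eb x})"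

section \<open>Generalized differentiation in the Hilbert space E \<times> L2 (dual identified with the space)\<close>

type_synonym 'a gpt = "'a pert \<times> ('a \<Rightarrow> real)"

definition gsub :: "'a gpt \<Rightarrow> 'a gpt \<Rightarrow> 'a gpt" where
  "gsub p q = (case p of ((a1, b1, c1, d1), u1) \<Rightarrow> case q of ((a2, b2, c2, d2), u2) \<Rightarrow>
     (((\<lambda>x. a1 x - a2 x), (\<lambda>x. b1 x - b2 x), (\<lambda>x. c1 x - c2 x), (\<lambda>x. d1 x - d2 x)), (\<lambda>x. u1 x - u2 x)))"

definition ginner :: "'a::euclidean_space set \<Rightarrow> 'a gpt \<Rightarrow> 'a gpt \<Rightarrow> real" where
  "ginner \<Omega> p q = (case p of ((a1, b1, c1, d1), u1) \<Rightarrow> case q of ((a2, b2, c2, d2), u2) \<Rightarrow>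
     L2_inner \<Omega> a1 a2 + L2_inner \<Omega> b1 b2 + L2_inner \<Omega> c1 c2 + L2_inner \<Omega> d1 d2 + L2_inner \<Omega> u1 u2)"

definition gnorm :: "'a::euclidean_space set \<Rightarrow> 'a gpt \<Rightarrow> real" where
  "gnorm \<Omega> p = sqrt (ginner \<Omega> p p)"

definition gspace :: "'a::euclidean_space set \<Rightarrow> 'a gpt set" where
  "gspace \<Omega> = Espace \<Omega> \<times> L2 \<Omega>"

definition eps_normal :: "'a::euclidean_space set \<Rightarrow> real \<Rightarrow> 'a gpt set \<Rightarrow> 'a gpt \<Rightarrow> 'a gpt set" where
  "eps_normal \<Omega> \<epsilon> S p = (if p \<in> S then
     {ps \<in> gspace \<Omega>. \<forall>\<eta>>0. \<exists>\<delta>>0. \<forall>q\<in>S. gnorm \<Omega> (gsub q p) < \<delta> \<longrightarrow>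
        ginner \<Omega> ps (gsub q p) \<le> (\<epsilon> + \<eta>) * gnorm \<Omega> (gsub q p)} else {})"

definition frechet_normal :: "'a::euclidean_space set \<Rightarrow> 'a gpt set \<Rightarrow> 'a gpt \<Rightarrow> 'a gpt set" where
  "frechet_normal \<Omega> S p = eps_normal \<Omega> 0 S p"

definition limiting_normal :: "'a::euclidean_space set \<Rightarrow> 'a gpt set \<Rightarrow> 'a gpt \<Rightarrow> 'a gpt set" where
  "limiting_normal \<Omega> S p = (if p \<in> S then
     {ps \<in> gspace \<Omega>. \<exists>\<epsilon> pk psk. (\<forall>k. \<epsilon> k \<ge> 0 \<and> pk k \<in> S \<and> psk k \<in> eps_normal \<Omega> (\<epsilon> k) S (pk k)) \<and>
        \<epsilon> \<longlonglongrightarrow> 0 \<and> (\<lambda>k. gnorm \<Omega> (gsub (pk k) p)) \<longlonglongrightarrow> 0 \<and>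
        (\<forall>v\<in>gspace \<Omega>. (\<lambda>k. ginner \<Omega> (psk k) v) \<longlonglongrightarrow> ginner \<Omega> ps v)} else {})"

definition gph :: "'a::euclidean_space set \<Rightarrow> ('a pert \<Rightarrow> ('a \<Rightarrow> real) set) \<Rightarrow> 'a gpt set" where
  "gph \<Omega> G = {(e, u). e \<in> Espace \<Omega> \<and> u \<in> G e}"

definition regular_coderiv :: "'a::euclidean_space set \<Rightarrow> ('a pert \<Rightarrow> ('a \<Rightarrow> real) set)
    \<Rightarrow> 'a pert \<Rightarrow> ('a \<Rightarrow> real) \<Rightarrow> ('a \<Rightarrow> real) \<Rightarrow> 'a pert set" where
  "regular_coderiv \<Omega> G e u us = {es. (es, (\<lambda>x. - us x)) \<in> frechet_normal \<Omega> (gph \<Omega> G) (e, u)}"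

definition limiting_coderiv :: "'a::euclidean_space set \<Rightarrow> ('a pert \<Rightarrow> ('a \<Rightarrow> real) set)
    \<Rightarrow> 'a pert \<Rightarrow> ('a \<Rightarrow> real) \<Rightarrow> ('a \<Rightarrow> real) \<Rightarrow> 'a pert set" where
  "limiting_coderiv \<Omega> G e u us = {es. (es, (\<lambda>x. - us x)) \<in> limiting_normal \<Omega> (gph \<Omega> G) (e, u)}"

end

theory Submission
  imports Defs
begin

lemma L2_meas: "f \<in> L2 \<Omega> \<Longrightarrow> f \<in> borel_measurable (M \<Omega>)"
  by (simp add: L2_def)

lemma L2_sq_int: "f \<in> L2 \<Omega> \<Longrightarrow> integrable (M \<Omega>) (\<lambda>x. (f x)\<^sup>2)"
  by (simp add: L2_def)

lemma L2_dom:
  assumes "f \<in> L2 \<Omega>" "g \<in> borel_measurable (M \<Omega>)" "AE x in M \<Omega>. \<bar>g x\<bar> \<le> \<bar>f x\<bar>"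
  shows "g \<in> L2 \<Omega>"
proof -
  have "integrable (M \<Omega>) (\<lambda>x. (g x)\<^sup>2)"
    apply (rule Bochner_Integration.integrable_bound[OF L2_sq_int[OF assms(1)]])
    using assms(2) apply measurable
    using assms(3) by (auto elim!: eventually_mono simp: abs_le_square_iff)
  with assms show ?thesis by (simp add: L2_def)
qed

lemma abs_prod_le: "\<bar>(a::real) * b\<bar> \<le> \<bar>a\<^sup>2 + b\<^sup>2\<bar>"
proof -
  have "0 \<le> (\<bar>a\<bar> - \<bar>b\<bar>)\<^sup>2" by simp
  then have "2 * (\<bar>a\<bar> * \<bar>b\<bar>) \<le> a\<^sup>2 + b\<^sup>2" by (simp add: power2_diff power2_abs)
  moreover have "\<bar>a\<bar> * \<bar>b\<bar> \<ge> 0" by simp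
  ultimately have "\<bar>a\<bar> * \<bar>b\<bar> \<le> a\<^sup>2 + b\<^sup>2" by linarith
  then show ?thesis by (simp add: abs_mult)
qed

lemma L2_mult_int:
  assumes "f \<in> L2 \<Omega>" "g \<in> L2 \<Omega>"
  shows "integrable (M \<Omega>) (\<lambda>x. f x * g x)"
proof -
  have i: "integrable (M \<Omega>) (\<lambda>x. (f x)\<^sup>2 + (g x)\<^sup>2)"
    using L2_sq_int[OF assms(1)] L2_sq_int[OF assms(2)] by simp
  show ?thesis
    apply (rule Bochner_Integration.integrable_bound[OF i])
    using L2_meas[OF assms(1)] L2_meas[OF assms(2)] apply measurable
    apply (rule AE_I2)
    using abs_prod_le by simp
qed

lemma L2_add: "f \<in> L2 \<Omega> \<Longrightarrow> g \<in> L2 \<Omega> \<Longrightarrow> (\<lambda>x. f x + g x) \<in> L2 \<Omega>"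
proof -
  assume a: "f \<in> L2 \<Omega>" "g \<in> L2 \<Omega>"
  have i: "integrable (M \<Omega>) (\<lambda>x. (f x)\<^sup>2 + (g x)\<^sup>2 + 2 * (f x * g x))"
    using L2_sq_int[OF a(1)] L2_sq_int[OF a(2)] L2_mult_int[OF a] by simp
  have "integrable (M \<Omega>) (\<lambda>x. (f x + g x)\<^sup>2)"
    using i by (simp add: power2_sum algebra_simps)
  with a show ?thesis by (auto simp: L2_def intro!: borel_measurable_add)
qed

lemma L2_scale: "f \<in> L2 \<Omega> \<Longrightarrow> (\<lambda>x. c * f x) \<in> L2 \<Omega>"
  by (auto simp: L2_def power_mult_distrib)

lemma L2_uminus: "f \<in> L2 \<Omega> \<Longrightarrow> (\<lambda>x. - f x) \<in> L2 \<Omega>"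
  using L2_scale[of f \<Omega> "-1"] by simp

lemma L2_diff: "f \<in> L2 \<Omega> \<Longrightarrow> g \<in> L2 \<Omega> \<Longrightarrow> (\<lambda>x. f x - g x) \<in> L2 \<Omega>"
  using L2_add[of f \<Omega> "\<lambda>x. - g x"] L2_uminus by auto

lemma L2_zero: "(\<lambda>x. 0) \<in> L2 \<Omega>"
  by (simp add: L2_def)

lemma L2_inner_add_right: "f \<in> L2 \<Omega> \<Longrightarrow> g \<in> L2 \<Omega> \<Longrightarrow> h \<in> L2 \<Omega> \<Longrightarrow>
  L2_inner \<Omega> f (\<lambda>x. g x + h x) = L2_inner \<Omega> f g + L2_inner \<Omega> f h"
  unfolding L2_inner_def using L2_mult_int[of f \<Omega> g] L2_mult_int[of f \<Omega> h]
  by (simp add: distrib_left)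

lemma L2_inner_diff_right: "f \<in> L2 \<Omega> \<Longrightarrow> g \<in> L2 \<Omega> \<Longrightarrow> h \<in> L2 \<Omega> \<Longrightarrow>
  L2_inner \<Omega> f (\<lambda>x. g x - h x) = L2_inner \<Omega> f g - L2_inner \<Omega> f h"
  unfolding L2_inner_def using L2_mult_int[of f \<Omega> g] L2_mult_int[of f \<Omega> h]
  by (simp add: right_diff_distrib)

lemma L2_inner_add_left: "f \<in> L2 \<Omega> \<Longrightarrow> g \<in> L2 \<Omega> \<Longrightarrow> h \<in> L2 \<Omega> \<Longrightarrow>
  L2_inner \<Omega> (\<lambda>x. g x + h x) f = L2_inner \<Omega> g f + L2_inner \<Omega> h f"
  unfolding L2_inner_def using L2_mult_int[of g \<Omega> f] L2_mult_int[of h \<Omega> f]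
  by (simp add: distrib_right)

lemma L2_inner_comm: "L2_inner \<Omega> f g = L2_inner \<Omega> g f"
  unfolding L2_inner_def by (simp add: mult.commute)

lemma L2_inner_scale_right: "L2_inner \<Omega> f (\<lambda>x. c * g x) = c * L2_inner \<Omega> f g"
  unfolding L2_inner_def by (simp add: algebra_simps)

lemma L2_inner_scale_left: "L2_inner \<Omega> (\<lambda>x. c * f x) g = c * L2_inner \<Omega> f g"
  unfolding L2_inner_def by (simp add: algebra_simps)

lemma L2_inner_minus_right: "L2_inner \<Omega> f (\<lambda>x. - g x) = - L2_inner \<Omega> f g"
  unfolding L2_inner_def by simp

lemma L2_inner_minus_left: "L2_inner \<Omega> (\<lambda>x. - f x) g = - L2_inner \<Omega> f g"
  unfolding L2_inner_def by simp

lemma L2_inner_zero_right[simp]: "L2_inner \<Omega> f (\<lambda>x. 0) = 0"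
  unfolding L2_inner_def by simp

lemma L2_inner_zero_left[simp]: "L2_inner \<Omega> (\<lambda>x. 0) f = 0"
  unfolding L2_inner_def by simp

lemma L2_inner_self_nonneg: "0 \<le> L2_inner \<Omega> f f"
  unfolding L2_inner_def by (rule integral_nonneg_AE) simp

lemma L2_norm_nonneg: "0 \<le> L2_norm \<Omega> f"
  unfolding L2_norm_def using L2_inner_self_nonneg by simp

lemma L2_norm_sq: "(L2_norm \<Omega> f)\<^sup>2 = L2_inner \<Omega> f f"
  unfolding L2_norm_def using L2_inner_self_nonneg by simp

lemma L2_inner_self_zero:
  assumes "f \<in> L2 \<Omega>" "L2_inner \<Omega> f f = 0" shows "AE x in M \<Omega>. f x = 0"
proof -
  have "integrable (M \<Omega>) (\<lambda>x. f x * f x)" using L2_mult_int[OF assms(1) assms(1)] .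
  then have "AE x in M \<Omega>. f x * f x = 0"
    using assms(2) integral_nonneg_eq_0_iff_AE[of "M \<Omega>" "\<lambda>x. f x * f x"] by (simp add: L2_inner_def)
  then show ?thesis by (auto elim: eventually_mono)
qed

lemma L2_inner_cong_AE:
  assumes "f \<in> borel_measurable (M \<Omega>)" "f' \<in> borel_measurable (M \<Omega>)"
    "g \<in> borel_measurable (M \<Omega>)" "g' \<in> borel_measurable (M \<Omega>)"
  assumes "AE x in M \<Omega>. f x = f' x" "AE x in M \<Omega>. g x = g' x"
  shows "L2_inner \<Omega> f g = L2_inner \<Omega> f' g'"
  unfolding L2_inner_def
proof (rule integral_cong_AE)
  show "AE x in M \<Omega>. f x * g x = f' x * g' x"
    using assms(5,6) by eventually_elim simp
qed (use assms in \<open>auto intro!: borel_measurable_times\<close>)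

lemma L2_CS:
  assumes f: "f \<in> L2 \<Omega>" and g: "g \<in> L2 \<Omega>"
  shows "L2_inner \<Omega> f g \<le> L2_norm \<Omega> f * L2_norm \<Omega> g"
proof -
  define a where "a = L2_norm \<Omega> f"
  define b where "b = L2_norm \<Omega> g"
  have a0: "a \<ge> 0" and b0: "b \<ge> 0" unfolding a_def b_def by (auto intro: L2_norm_nonneg)
  have fa: "L2_inner \<Omega> f f = a\<^sup>2" and gb: "L2_inner \<Omega> g g = b\<^sup>2"
    unfolding a_def b_def by (simp_all add: L2_norm_sq)
  show ?thesis
  proof (cases "a = 0 \<or> b = 0")
    case True
    then show ?thesis
    proof
      assume "a = 0"
      then have "AE x in M \<Omega>. f x = 0" using L2_inner_self_zero[OF f] fa by simp
      then have "L2_inner \<Omega> f g = L2_inner \<Omega> (\<lambda>x. 0) g"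
        by (intro L2_inner_cong_AE) (use f g L2_meas in auto)
      then show ?thesis using \<open>a = 0\<close> a_def by simp
    next
      assume "b = 0"
      then have "AE x in M \<Omega>. g x = 0" using L2_inner_self_zero[OF g] gb by simp
      then have "L2_inner \<Omega> f g = L2_inner \<Omega> f (\<lambda>x. 0)"
        by (intro L2_inner_cong_AE) (use f g L2_meas in auto)
      then show ?thesis using \<open>b = 0\<close> b_def by simp
    qed
  next
    case False
    then have ap: "a > 0" and bp: "b > 0" using a0 b0 by auto
    have pw: "u * v \<le> (b / (2*a)) * u\<^sup>2 + (a / (2*b)) * v\<^sup>2" for u v :: real
    proof -
      have "0 \<le> (b * u - a * v)^2" by simp
      then have "2 * a * b * (u * v) \<le> b\<^sup>2 * u\<^sup>2 + a\<^sup>2 * v\<^sup>2" by (simp add: power2_diff power_mult_distrib algebra_simps)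
      then show ?thesis using ap bp by (simp add: field_simps power2_eq_square)
    qed
    have "L2_inner \<Omega> f g \<le> integral\<^sup>L (M \<Omega>) (\<lambda>x. (b / (2*a)) * (f x)\<^sup>2 + (a / (2*b)) * (g x)\<^sup>2)"
      unfolding L2_inner_def
      by (rule integral_mono) (use L2_mult_int[OF f g] L2_sq_int[OF f] L2_sq_int[OF g] pw in auto)
    also have "\<dots> = (b / (2*a)) * L2_inner \<Omega> f f + (a / (2*b)) * L2_inner \<Omega> g g"
      using L2_sq_int[OF f] L2_sq_int[OF g] by (simp add: L2_inner_def power2_eq_square)
    also have "\<dots> = a * b" using ap bp by (simp add: fa gb field_simps power2_eq_square)
    finally show ?thesis by (simp add: a_def b_def)
  qed
qed

lemma L2_CS_abs:
  assumes f: "f \<in> L2 \<Omega>" and g: "g \<in> L2 \<Omega>"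
  shows "\<bar>L2_inner \<Omega> f g\<bar> \<le> L2_norm \<Omega> f * L2_norm \<Omega> g"
proof -
  have "L2_norm \<Omega> (\<lambda>x. - f x) = L2_norm \<Omega> f" by (simp add: L2_norm_def L2_inner_def)
  then have "- L2_inner \<Omega> f g \<le> L2_norm \<Omega> f * L2_norm \<Omega> g"
    using L2_CS[OF L2_uminus[OF f] g] by (simp add: L2_inner_minus_left)
  then show ?thesis using L2_CS[OF f g] by linarith
qed

lemma L2_norm_add_le:
  assumes f: "f \<in> L2 \<Omega>" and g: "g \<in> L2 \<Omega>"
  shows "L2_norm \<Omega> (\<lambda>x. f x + g x) \<le> L2_norm \<Omega> f + L2_norm \<Omega> g"
proof -
  have "(L2_norm \<Omega> (\<lambda>x. f x + g x))\<^sup>2 = L2_inner \<Omega> f f + 2 * L2_inner \<Omega> f g + L2_inner \<Omega> g g"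
    using f g L2_add[OF f g]
    by (simp add: L2_norm_sq L2_inner_add_left L2_inner_add_right L2_inner_comm[of \<Omega> g f])
  also have "\<dots> \<le> (L2_norm \<Omega> f + L2_norm \<Omega> g)\<^sup>2"
    using L2_CS[OF f g] by (simp add: power2_sum L2_norm_sq)
  finally show ?thesis
    using L2_norm_nonneg[of \<Omega> f] L2_norm_nonneg[of \<Omega> g] L2_norm_nonneg[of \<Omega> "\<lambda>x. f x + g x"]
    by (meson power2_le_imp_le add_nonneg_nonneg)
qed

lemma L2_norm_diff_le:
  assumes f: "f \<in> L2 \<Omega>" and g: "g \<in> L2 \<Omega>"
  shows "L2_norm \<Omega> (\<lambda>x. f x - g x) \<le> L2_norm \<Omega> f + L2_norm \<Omega> g"
proof -
  have "L2_norm \<Omega> (\<lambda>x. - g x) = L2_norm \<Omega> g" by (simp add: L2_norm_def L2_inner_def)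
  then show ?thesis using L2_norm_add_le[OF f L2_uminus[OF g]] by simp
qed

lemma L2_norm_mono:
  assumes g: "g \<in> L2 \<Omega>" and f: "f \<in> borel_measurable (M \<Omega>)" and le: "AE x in M \<Omega>. \<bar>f x\<bar> \<le> \<bar>g x\<bar>"
  shows "L2_norm \<Omega> f \<le> L2_norm \<Omega> g"
proof -
  have fL: "f \<in> L2 \<Omega>" by (rule L2_dom[OF g f le])
  have "L2_inner \<Omega> f f \<le> L2_inner \<Omega> g g"
    unfolding L2_inner_def
    by (rule integral_mono_AE) (use L2_mult_int[OF fL fL] L2_mult_int[OF g g] le in
        \<open>auto elim!: eventually_mono intro: abs_le_square_iff[THEN iffD1, unfolded power2_eq_square]\<close>)
  then show ?thesis unfolding L2_norm_def by simp
qed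

lemma L2_norm_scale: "L2_norm \<Omega> (\<lambda>x. c * f x) = \<bar>c\<bar> * L2_norm \<Omega> f"
proof -
  have "L2_inner \<Omega> (\<lambda>x. c * f x) (\<lambda>x. c * f x) = c\<^sup>2 * L2_inner \<Omega> f f"
    by (simp add: L2_inner_scale_left L2_inner_scale_right power2_eq_square)
  then show ?thesis by (simp add: L2_norm_def real_sqrt_mult)
qed

lemma S_mem: "((a1,a2,a3,a4),u) \<in> gph \<Omega> (Gmap \<Omega> \<alpha> \<beta> Q) \<longleftrightarrow>
   a1 \<in> L2 \<Omega> \<and> a2 \<in> L2 \<Omega> \<and> a3 \<in> L2 \<Omega> \<and> a4 \<in> L2 \<Omega> \<and> u \<in> L2 \<Omega> \<and>
   (AE x in M \<Omega>. \<alpha> x + a3 x \<le> u x \<and> u x \<le> \<beta> x + a4 x) \<and> u \<in> Q"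
  by (auto simp: gph_def Espace_def Gmap_def Uad_def)

lemma gsub_simp: "gsub ((a1,a2,a3,a4),u) ((b1,b2,b3,b4),v) =
  ((\<lambda>x. a1 x - b1 x, \<lambda>x. a2 x - b2 x, \<lambda>x. a3 x - b3 x, \<lambda>x. a4 x - b4 x), \<lambda>x. u x - v x)"
  by (simp add: gsub_def)

lemma ginner_simp: "ginner \<Omega> ((a1,a2,a3,a4),u) ((b1,b2,b3,b4),v) =
  L2_inner \<Omega> a1 b1 + L2_inner \<Omega> a2 b2 + L2_inner \<Omega> a3 b3 + L2_inner \<Omega> a4 b4 + L2_inner \<Omega> u v"
  by (simp add: ginner_def)

lemma gnorm_simp: "gnorm \<Omega> ((a1,a2,a3,a4),u) =
  sqrt (L2_inner \<Omega> a1 a1 + L2_inner \<Omega> a2 a2 + L2_inner \<Omega> a3 a3 + L2_inner \<Omega> a4 a4 + L2_inner \<Omega> u u)"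
  by (simp add: gnorm_def ginner_def)

lemma eps_dir:
  assumes ps: "((Y,J,A,B),U) \<in> eps_normal \<Omega> \<epsilon> S ((a1,a2,a3,a4),a5)"
  and adm: "\<And>t. 0 < t \<Longrightarrow> t \<le> 1 \<Longrightarrow> ((\<lambda>x. a1 x + t*h1 x, \<lambda>x. a2 x + t*h2 x, \<lambda>x. a3 x + t*h3 x,
      \<lambda>x. a4 x + t*h4 x), \<lambda>x. a5 x + t*h5 x) \<in> S"
  shows "L2_inner \<Omega> Y h1 + L2_inner \<Omega> J h2 + L2_inner \<Omega> A h3 + L2_inner \<Omega> B h4 + L2_inner \<Omega> U h5
     \<le> \<epsilon> * sqrt (L2_inner \<Omega> h1 h1 + L2_inner \<Omega> h2 h2 + L2_inner \<Omega> h3 h3 + L2_inner \<Omega> h4 h4 + L2_inner \<Omega> h5 h5)"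
proof -
  define I where "I = L2_inner \<Omega> Y h1 + L2_inner \<Omega> J h2 + L2_inner \<Omega> A h3 + L2_inner \<Omega> B h4 + L2_inner \<Omega> U h5"
  define SS where "SS = L2_inner \<Omega> h1 h1 + L2_inner \<Omega> h2 h2 + L2_inner \<Omega> h3 h3 + L2_inner \<Omega> h4 h4 + L2_inner \<Omega> h5 h5"
  define N where "N = sqrt SS"
  have SS0: "0 \<le> SS" unfolding SS_def using L2_inner_self_nonneg
    by (metis add_nonneg_nonneg)
  have N0: "0 \<le> N" unfolding N_def using SS0 by simp
  define p where "p = ((a1,a2,a3,a4),a5)"
  define q where "q = (\<lambda>t. ((\<lambda>x. a1 x + t*h1 x, \<lambda>x. a2 x + t*h2 x, \<lambda>x. a3 x + t*h3 x,
      \<lambda>x. a4 x + t*h4 x), \<lambda>x. a5 x + t*h5 x))"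
  have pS: "p \<in> S" using ps unfolding p_def by (simp add: eps_normal_def split: if_splits)
  have cond: "\<forall>\<eta>>0. \<exists>\<delta>>0. \<forall>q\<in>S. gnorm \<Omega> (gsub q p) < \<delta> \<longrightarrow>
      ginner \<Omega> ((Y,J,A,B),U) (gsub q p) \<le> (\<epsilon> + \<eta>) * gnorm \<Omega> (gsub q p)"
    using ps pS unfolding p_def by (simp add: eps_normal_def)
  have gs: "gsub (q t) p = ((\<lambda>x. t * h1 x, \<lambda>x. t * h2 x, \<lambda>x. t * h3 x, \<lambda>x. t * h4 x), \<lambda>x. t * h5 x)" for t
    unfolding q_def p_def gsub_simp by simp
  have gi: "ginner \<Omega> ((Y,J,A,B),U) (gsub (q t) p) = t * I" for t
    unfolding gs ginner_simp I_def L2_inner_scale_right by (simp add: algebra_simps)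
  have gn: "gnorm \<Omega> (gsub (q t) p) = t * N" if "t > 0" for t
  proof -
    have "gnorm \<Omega> (gsub (q t) p) = sqrt (t\<^sup>2 * SS)"
      unfolding gs gnorm_simp SS_def L2_inner_scale_right L2_inner_scale_left
      by (simp add: algebra_simps power2_eq_square)
    then show ?thesis using that by (simp add: N_def real_sqrt_mult)
  qed
  have main: "I \<le> (\<epsilon> + \<eta>) * N" if eta: "\<eta> > 0" for \<eta>
  proof -
    obtain \<delta> where d: "\<delta> > 0" and dq: "\<forall>q\<in>S. gnorm \<Omega> (gsub q p) < \<delta> \<longrightarrow>
      ginner \<Omega> ((Y,J,A,B),U) (gsub q p) \<le> (\<epsilon> + \<eta>) * gnorm \<Omega> (gsub q p)"
      using cond eta by blast
    define t where "t = min 1 (\<delta> / (2*(N+1)))"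
    have t0: "t > 0" unfolding t_def using d N0 by simp
    have t1: "t \<le> 1" unfolding t_def by simp
    have "t * N \<le> (\<delta> / (2*(N+1))) * N" unfolding t_def using N0 by (intro mult_right_mono) auto
    also have "\<dots> < \<delta>"
    proof -
      have "N / (2*(N+1)) < 1" using N0 by (simp add: field_simps)
      then have "\<delta> * (N / (2*(N+1))) < \<delta> * 1" using d by (intro mult_strict_left_mono) auto
      then show ?thesis by (simp add: field_simps)
    qed
    finally have tN: "t * N < \<delta>" .
    have "q t \<in> S" unfolding q_def using adm t0 t1 by blast
    then have "t * I \<le> (\<epsilon> + \<eta>) * (t * N)" using dq tN gi gn[OF t0] by auto
    then have "t * I \<le> t * ((\<epsilon> + \<eta>) * N)" by (simp add: algebra_simps)
    then show ?thesis using t0 by simp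
  qed
  have "I \<le> \<epsilon> * N"
  proof (cases "N = 0")
    case True then show ?thesis using main[of 1] by simp
  next
    case False
    then have Np: "N > 0" using N0 by simp
    show ?thesis
    proof (rule field_le_epsilon)
      fix e :: real assume "e > 0"
      then have "I \<le> (\<epsilon> + e / N) * N" using main[of "e/N"] Np by simp
      then show "I \<le> \<epsilon> * N + e" using Np by (simp add: algebra_simps)
    qed
  qed
  then show ?thesis unfolding I_def N_def SS_def .
qed

lemma subseq_pick:
  fixes P :: "nat \<Rightarrow> nat \<Rightarrow> bool"
  assumes "\<And>j N. \<exists>k\<ge>N. P j k"
  shows "\<exists>r. strict_mono r \<and> (\<forall>j. P j (r j))"
proof -
  have "\<forall>p. \<exists>k. snd p \<le> k \<and> P (fst p) k" using assms by blast
  then obtain g where g: "\<forall>p. snd p \<le> g p \<and> P (fst p) (g p)" by metis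
  define f where "f j N = g (j, N)" for j N
  have f: "\<And>j N. f j N \<ge> N \<and> P j (f j N)" unfolding f_def using g by (metis fst_conv snd_conv)
  define r where "r = rec_nat (f 0 0) (\<lambda>j rj. f (Suc j) (Suc rj))"
  have r0: "r 0 = f 0 0" and rS: "\<And>j. r (Suc j) = f (Suc j) (Suc (r j))" by (simp_all add: r_def)
  have "strict_mono r"
    unfolding strict_mono_Suc_iff using f rS by (metis Suc_le_lessD)
  moreover have "P j (r j)" for j by (cases j) (use f r0 rS in auto)
  ultimately show ?thesis by blast
qed

lemma hump:
  assumes z: "\<And>k. z k \<in> L2 \<Omega>"
  and conv: "\<And>v. v \<in> L2 \<Omega> \<Longrightarrow> convergent (\<lambda>k. L2_inner \<Omega> (z k) v)"
  and neg: "\<And>k \<phi>. \<phi> \<in> L2 \<Omega> \<Longrightarrow> AE x in M \<Omega>. \<phi> x \<ge> 0 \<Longrightarrow> - L2_inner \<Omega> (z k) \<phi> \<le> E * L2_norm \<Omega> \<phi>"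
  and E: "E \<ge> 0"
  and d: "\<And>k. d k \<in> L2 \<Omega>" and dnn: "\<And>k. AE x in M \<Omega>. d k x \<ge> 0"
  and dlim: "(\<lambda>k. L2_norm \<Omega> (d k)) \<longlonglongrightarrow> 0"
  and c: "c > 0"
  shows "eventually (\<lambda>k. L2_inner \<Omega> (z k) (d k) \<le> c) sequentially"
proof (rule ccontr)
  assume "\<not> ?thesis"
  then have fr: "frequently (\<lambda>k. L2_inner \<Omega> (z k) (d k) > c) sequentially"
    by (simp add: not_eventually not_le)
  have "\<exists>k\<ge>N. L2_inner \<Omega> (z k) (d k) > c \<and> L2_norm \<Omega> (d k) \<le> (1/16)^j" for j N
  proof -
    have "eventually (\<lambda>k. L2_norm \<Omega> (d k) < (1/16)^j) sequentially"
      using order_tendstoD(2)[OF dlim, of "(1/16)^j"] by simp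
    with fr have "frequently (\<lambda>k. L2_inner \<Omega> (z k) (d k) > c \<and> L2_norm \<Omega> (d k) < (1/16)^j) sequentially"
      by (rule frequently_eventually_frequently)
    then show ?thesis unfolding frequently_sequentially by (meson less_imp_le)
  qed
  then obtain r where r: "strict_mono r"
    and rP: "\<And>j. L2_inner \<Omega> (z (r j)) (d (r j)) > c \<and> L2_norm \<Omega> (d (r j)) \<le> (1/16)^j"
    using subseq_pick[of "\<lambda>j k. L2_inner \<Omega> (z k) (d k) > c \<and> L2_norm \<Omega> (d k) \<le> (1/16)^j"] by blast
  define D where "D j = d (r j)" for j
  have DL: "D j \<in> L2 \<Omega>" for j unfolding D_def by (rule d)
  have Dm[measurable]: "D j \<in> borel_measurable (M \<Omega>)" for j using DL L2_meas by blast
  have Dnn: "AE x in M \<Omega>. \<forall>j. D j x \<ge> 0" unfolding D_def using dnn by (simp add: AE_all_countable)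
  define V where "V x = (\<Sum>j. ennreal (4^j * (D j x)\<^sup>2))" for x
  define v where "v x = sqrt (enn2real (V x))" for x
  have Vm[measurable]: "V \<in> borel_measurable (M \<Omega>)" unfolding V_def by measurable
  have vm[measurable]: "v \<in> borel_measurable (M \<Omega>)" unfolding v_def by measurable
  have termb: "(\<integral>\<^sup>+x. ennreal (4^j * (D j x)\<^sup>2) \<partial>M \<Omega>) \<le> ennreal ((1/64)^j)" for j
  proof -
    have "(\<integral>\<^sup>+x. ennreal (4^j * (D j x)\<^sup>2) \<partial>M \<Omega>) = ennreal (integral\<^sup>L (M \<Omega>) (\<lambda>x. 4^j * (D j x)\<^sup>2))"
      by (rule nn_integral_eq_integral) (use L2_sq_int[OF DL[of j]] in auto)
    also have "integral\<^sup>L (M \<Omega>) (\<lambda>x. 4^j * (D j x)\<^sup>2) = 4^j * (L2_norm \<Omega> (D j))\<^sup>2"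
      unfolding L2_norm_sq by (simp add: L2_inner_def power2_eq_square)
    also have "\<dots> \<le> 4^j * ((1/16)^j)\<^sup>2"
      using rP[of j] L2_norm_nonneg[of \<Omega> "D j"] unfolding D_def
      by (intro mult_left_mono power_mono) auto
    also have "\<dots> = (1/64)^j"
      by (simp add: power2_eq_square power_mult_distrib[symmetric] flip: power_mult_distrib)
    finally show ?thesis by (simp add: ennreal_leI)
  qed
  have intV: "(\<integral>\<^sup>+x. V x \<partial>M \<Omega>) \<le> ennreal (64/63)"
  proof -
    have "(\<integral>\<^sup>+x. V x \<partial>M \<Omega>) = (\<Sum>j. (\<integral>\<^sup>+x. ennreal (4^j * (D j x)\<^sup>2) \<partial>M \<Omega>))"
      unfolding V_def by (rule nn_integral_suminf) measurable
    also have "\<dots> \<le> (\<Sum>j. ennreal ((1/64)^j))"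
      by (rule suminf_le) (use termb in \<open>auto intro: summableI\<close>)
    also have "\<dots> = ennreal (\<Sum>j. (1/64::real)^j)"
      by (rule suminf_ennreal2) (auto intro: summable_geometric)
    also have "(\<Sum>j. (1/64::real)^j) = 64/63"
      using suminf_geometric[of "1/64::real"] by simp
    finally show ?thesis .
  qed
  have Vfin: "AE x in M \<Omega>. V x \<noteq> \<infinity>"
  proof (rule nn_integral_PInf_AE)
    have "ennreal (64/63) < \<infinity>" by simp
    then show "integral\<^sup>N (M \<Omega>) V \<noteq> \<infinity>" using intV by (auto simp: top_unique)
  qed measurable
  have vL: "v \<in> L2 \<Omega>"
  proof -
    have "integrable (M \<Omega>) (\<lambda>x. (v x)\<^sup>2)"
    proof (rule integrableI_bounded)
      have "(\<integral>\<^sup>+x. ennreal (norm ((v x)\<^sup>2)) \<partial>M \<Omega>) \<le> (\<integral>\<^sup>+x. V x \<partial>M \<Omega>)"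
      proof (rule nn_integral_mono)
        fix x
        have e: "(v x)\<^sup>2 = enn2real (V x)" by (simp add: v_def)
        show "ennreal (norm ((v x)\<^sup>2)) \<le> V x"
          unfolding e by (cases "V x = top") (auto simp: ennreal_enn2real_if)
      qed
      also have "\<dots> < \<infinity>" using intV by (simp add: le_less_trans)
      finally show "(\<integral>\<^sup>+x. ennreal (norm ((v x)\<^sup>2)) \<partial>M \<Omega>) < \<infinity>" .
    qed measurable
    then show ?thesis by (simp add: L2_def)
  qed
  have vbig: "AE x in M \<Omega>. \<forall>j. 2^j * D j x \<le> v x \<and> 0 \<le> D j x"
    using Vfin Dnn
  proof eventually_elim
    case (elim x)
    show ?case
    proof
      fix j
      have "(\<Sum>i\<in>{j}. ennreal (4^i * (D i x)\<^sup>2)) \<le> (\<Sum>i. ennreal (4^i * (D i x)\<^sup>2))"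
        by (rule sum_le_suminf[OF summableI]) simp_all
      then have "ennreal (4^j * (D j x)\<^sup>2) \<le> V x" unfolding V_def by simp
      moreover have "V x < top" using elim by (simp add: less_top)
      ultimately have "enn2real (ennreal (4^j * (D j x)\<^sup>2)) \<le> enn2real (V x)"
        by (rule enn2real_mono)
      then have "4^j * (D j x)\<^sup>2 \<le> enn2real (V x)" by simp
      then have "sqrt (4^j * (D j x)\<^sup>2) \<le> v x" unfolding v_def by simp
      moreover have "sqrt (4^j * (D j x)\<^sup>2) = 2^j * D j x"
      proof -
        have "(4::real)^j = (2^j)\<^sup>2" by (simp add: power_mult_distrib[symmetric] power2_eq_square flip: power_mult_distrib)
        then show ?thesis using elim by (simp add: real_sqrt_mult)
      qed
      ultimately show "2^j * D j x \<le> v x \<and> 0 \<le> D j x" using elim by simp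
    qed
  qed
  obtain K where K: "\<And>k. \<bar>L2_inner \<Omega> (z k) v\<bar> \<le> K"
    using convergent_imp_Bseq[OF conv[OF vL]] unfolding Bseq_def by auto
  have low: "L2_inner \<Omega> (z (r j)) v \<ge> 2^j * c - E * L2_norm \<Omega> v" for j
  proof -
    define \<phi> where "\<phi> x = v x - 2^j * D j x" for x
    have \<phi>L: "\<phi> \<in> L2 \<Omega>" unfolding \<phi>_def by (intro L2_diff vL L2_scale DL)
    have \<phi>nn: "AE x in M \<Omega>. \<phi> x \<ge> 0" using vbig by eventually_elim (simp add: \<phi>_def)
    have \<phi>le: "L2_norm \<Omega> \<phi> \<le> L2_norm \<Omega> v"
    proof (rule L2_norm_mono[OF vL])
      show "\<phi> \<in> borel_measurable (M \<Omega>)" using \<phi>L L2_meas by blast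
      show "AE x in M \<Omega>. \<bar>\<phi> x\<bar> \<le> \<bar>v x\<bar>" using vbig
      proof eventually_elim
        case (elim x)
        then have "2^j * D j x \<le> v x" "0 \<le> D j x" by auto
        moreover have "0 \<le> 2^j * D j x" using \<open>0 \<le> D j x\<close> by simp
        ultimately show ?case unfolding \<phi>_def by linarith
      qed
    qed
    have eq: "v = (\<lambda>x. 2^j * D j x + \<phi> x)" unfolding \<phi>_def by auto
    have "L2_inner \<Omega> (z (r j)) v = 2^j * L2_inner \<Omega> (z (r j)) (D j) + L2_inner \<Omega> (z (r j)) \<phi>"
      by (subst eq, subst L2_inner_add_right) (use z L2_scale[OF DL] \<phi>L in \<open>auto simp: L2_inner_scale_right\<close>)
    moreover have "2^j * L2_inner \<Omega> (z (r j)) (D j) \<ge> 2^j * c"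
      using rP[of j] unfolding D_def by simp
    moreover have "- L2_inner \<Omega> (z (r j)) \<phi> \<le> E * L2_norm \<Omega> v"
      using neg[OF \<phi>L \<phi>nn, of "r j"] mult_left_mono[OF \<phi>le E] by linarith
    ultimately show ?thesis by linarith
  qed
  obtain j where j: "(K + E * L2_norm \<Omega> v) / c < 2^j"
    using real_arch_pow[of 2 "(K + E * L2_norm \<Omega> v) / c"] by auto
  then have "K + E * L2_norm \<Omega> v < 2^j * c" using c by (simp add: field_simps)
  with low[of j] K[of "r j"] show False by linarith
qed

lemma weak_zero:
  assumes Y: "Y \<in> L2 \<Omega>" and wk: "\<And>h. h \<in> L2 \<Omega> \<Longrightarrow> (\<lambda>k. L2_inner \<Omega> (Yk k) h) \<longlonglongrightarrow> L2_inner \<Omega> Y h"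
  and bd: "\<And>k h. h \<in> L2 \<Omega> \<Longrightarrow> L2_inner \<Omega> (Yk k) h \<le> \<epsilon> k * L2_norm \<Omega> h"
  and eps: "\<epsilon> \<longlonglongrightarrow> 0"
  shows "AE x in M \<Omega>. Y x = 0"
proof -
  have "(\<lambda>k. \<epsilon> k * L2_norm \<Omega> Y) \<longlonglongrightarrow> 0 * L2_norm \<Omega> Y"
    by (intro tendsto_intros eps)
  then have "L2_inner \<Omega> Y Y \<le> 0"
    using wk[OF Y] bd[OF Y] by (intro tendsto_le[OF _ _ wk[OF Y]]) (auto intro: always_eventually)
  then have "L2_inner \<Omega> Y Y = 0" using L2_inner_self_nonneg[of \<Omega> Y] by linarith
  then show ?thesis by (rule L2_inner_self_zero[OF Y])
qed

lemma weak_nonneg: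
  assumes A: "A \<in> L2 \<Omega>" and wk: "\<And>h. h \<in> L2 \<Omega> \<Longrightarrow> (\<lambda>k. L2_inner \<Omega> (Ak k) h) \<longlonglongrightarrow> L2_inner \<Omega> A h"
  and bd: "\<And>k \<phi>. \<phi> \<in> L2 \<Omega> \<Longrightarrow> AE x in M \<Omega>. \<phi> x \<ge> 0 \<Longrightarrow> - L2_inner \<Omega> (Ak k) \<phi> \<le> \<epsilon> k * L2_norm \<Omega> \<phi>"
  and eps: "\<epsilon> \<longlonglongrightarrow> 0"
  shows "AE x in M \<Omega>. A x \<ge> 0"
proof -
  define \<phi> where "\<phi> x = max 0 (- A x)" for x
  have \<phi>L: "\<phi> \<in> L2 \<Omega>"
  proof (rule L2_dom[OF A])
    have "A \<in> borel_measurable (M \<Omega>)" using A L2_meas by blast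
    then show "\<phi> \<in> borel_measurable (M \<Omega>)" unfolding \<phi>_def by measurable
  qed (auto simp: \<phi>_def)
  have \<phi>nn: "AE x in M \<Omega>. \<phi> x \<ge> 0" by (simp add: \<phi>_def)
  have "(\<lambda>k. \<epsilon> k * L2_norm \<Omega> \<phi>) \<longlonglongrightarrow> 0 * L2_norm \<Omega> \<phi>"
    by (intro tendsto_intros eps)
  moreover have "(\<lambda>k. - L2_inner \<Omega> (Ak k) \<phi>) \<longlonglongrightarrow> - L2_inner \<Omega> A \<phi>"
    by (intro tendsto_intros wk \<phi>L)
  ultimately have "- L2_inner \<Omega> A \<phi> \<le> 0"
    using bd[OF \<phi>L \<phi>nn] by (intro tendsto_le) (auto intro: always_eventually)
  moreover have "L2_inner \<Omega> A \<phi> = - L2_inner \<Omega> \<phi> \<phi>"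
  proof -
    have "(\<lambda>x. A x * \<phi> x) = (\<lambda>x. - (\<phi> x * \<phi> x))" by (auto simp: \<phi>_def max_def)
    then show ?thesis by (simp add: L2_inner_def)
  qed
  ultimately have "L2_inner \<Omega> \<phi> \<phi> = 0" using L2_inner_self_nonneg[of \<Omega> \<phi>] by linarith
  then have "AE x in M \<Omega>. \<phi> x = 0" by (rule L2_inner_self_zero[OF \<phi>L])
  then show ?thesis by eventually_elim (auto simp: \<phi>_def max_def split: if_splits)
qed

lemma conv_bounded:
  assumes "X \<longlonglongrightarrow> (l::real)" shows "\<exists>K\<ge>0. \<forall>k. \<bar>X k\<bar> \<le> K"
proof -
  have "Bseq X" using assms by (intro convergent_imp_Bseq convergentI)
  then obtain K where "K > 0" "\<And>k. norm (X k) \<le> K" unfolding Bseq_def by auto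
  then show ?thesis by (intro exI[of _ K]) auto
qed

lemma cone_lim:
  assumes z: "\<And>k. z k \<in> L2 \<Omega>" and zl: "zz \<in> L2 \<Omega>"
  and wk: "\<And>h. h \<in> L2 \<Omega> \<Longrightarrow> (\<lambda>k. L2_inner \<Omega> (z k) h) \<longlonglongrightarrow> L2_inner \<Omega> zz h"
  and eps: "\<epsilon> \<longlonglongrightarrow> 0" and eps0: "\<And>k. \<epsilon> k \<ge> 0"
  and neg: "\<And>k \<phi>. \<phi> \<in> L2 \<Omega> \<Longrightarrow> AE x in M \<Omega>. \<phi> x \<ge> 0 \<Longrightarrow> - L2_inner \<Omega> (z k) \<phi> \<le> \<epsilon> k * L2_norm \<Omega> \<phi>"
  and pos: "\<And>k m. m \<in> L2 \<Omega> \<Longrightarrow> AE x in M \<Omega>. 0 \<le> m x \<and> m x \<le> \<phi>k k x \<Longrightarrow> L2_inner \<Omega> (z k) m \<le> \<epsilon> k * L2_norm \<Omega> m"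
  and \<phi>km: "\<And>k. \<phi>k k \<in> borel_measurable (M \<Omega>)" and \<phi>knn: "\<And>k. AE x in M \<Omega>. \<phi>k k x \<ge> 0"
  and \<phi>bm: "\<phi>b \<in> borel_measurable (M \<Omega>)" and \<phi>bnn: "AE x in M \<Omega>. \<phi>b x \<ge> 0"
  and dL: "\<And>k. (\<lambda>x. \<phi>b x - \<phi>k k x) \<in> L2 \<Omega>" and dlim: "(\<lambda>k. L2_norm \<Omega> (\<lambda>x. \<phi>b x - \<phi>k k x)) \<longlonglongrightarrow> 0"
  shows "AE x in M \<Omega>. zz x \<ge> 0 \<and> (\<phi>b x > 0 \<longrightarrow> zz x = 0)"
proof -
  have zznn: "AE x in M \<Omega>. zz x \<ge> 0" by (rule weak_nonneg[OF zl wk neg eps])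
  have zm: "zz \<in> borel_measurable (M \<Omega>)" using zl L2_meas by blast
  define g where "g x = min (\<phi>b x) (max 0 (zz x))" for x
  have gm: "g \<in> borel_measurable (M \<Omega>)" unfolding g_def using zm \<phi>bm by measurable
  have gL: "g \<in> L2 \<Omega>"
    by (rule L2_dom[OF zl gm]) (use \<phi>bnn in \<open>auto simp: g_def elim!: eventually_mono\<close>)
  have gnn: "AE x in M \<Omega>. g x \<ge> 0" using \<phi>bnn by eventually_elim (simp add: g_def)
  define m where "m k x = min (\<phi>k k x) (g x)" for k x
  have mm: "m k \<in> borel_measurable (M \<Omega>)" for k unfolding m_def using gm \<phi>km[of k] by measurable
  have mle: "AE x in M \<Omega>. \<bar>m k x\<bar> \<le> \<bar>g x\<bar>" for k
    using gnn \<phi>knn[of k] by eventually_elim (auto simp: m_def)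
  have mL: "m k \<in> L2 \<Omega>" for k by (rule L2_dom[OF gL mm mle])
  have mnorm: "L2_norm \<Omega> (m k) \<le> L2_norm \<Omega> g" for k by (rule L2_norm_mono[OF gL mm mle])
  have madm: "AE x in M \<Omega>. 0 \<le> m k x \<and> m k x \<le> \<phi>k k x" for k
    using gnn \<phi>knn[of k] by eventually_elim (auto simp: m_def)
  define dd where "dd k x = g x - m k x" for k x
  have ddL: "dd k \<in> L2 \<Omega>" for k unfolding dd_def by (intro L2_diff gL mL)
  have ddnn: "AE x in M \<Omega>. dd k x \<ge> 0" for k by (simp add: dd_def m_def)
  have ddle: "AE x in M \<Omega>. \<bar>dd k x\<bar> \<le> \<bar>\<phi>b x - \<phi>k k x\<bar>" for k
    using gnn \<phi>knn[of k] by eventually_elim (auto simp: dd_def m_def g_def min_def max_def split: if_splits)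
  have ddlim: "(\<lambda>k. L2_norm \<Omega> (dd k)) \<longlonglongrightarrow> 0"
  proof (rule tendsto_sandwich[OF _ _ tendsto_const dlim])
    show "\<forall>\<^sub>F k in sequentially. 0 \<le> L2_norm \<Omega> (dd k)" by (simp add: L2_norm_nonneg)
    show "\<forall>\<^sub>F k in sequentially. L2_norm \<Omega> (dd k) \<le> L2_norm \<Omega> (\<lambda>x. \<phi>b x - \<phi>k k x)"
      using L2_norm_mono[OF dL L2_meas[OF ddL] ddle] by simp
  qed
  obtain E where E0: "E \<ge> 0" and E: "\<And>k. \<bar>\<epsilon> k\<bar> \<le> E" using conv_bounded[OF eps] by auto
  have negE: "- L2_inner \<Omega> (z k) \<phi> \<le> E * L2_norm \<Omega> \<phi>" if "\<phi> \<in> L2 \<Omega>" "AE x in M \<Omega>. \<phi> x \<ge> 0" for k \<phi>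
  proof -
    have "\<epsilon> k * L2_norm \<Omega> \<phi> \<le> E * L2_norm \<Omega> \<phi>"
      using E[of k] L2_norm_nonneg[of \<Omega> \<phi>] by (intro mult_right_mono) auto
    then show ?thesis using neg[OF that, of k] by linarith
  qed
  have conv: "convergent (\<lambda>k. L2_inner \<Omega> (z k) v)" if "v \<in> L2 \<Omega>" for v
    using wk[OF that] by (rule convergentI)
  have ev: "eventually (\<lambda>k. L2_inner \<Omega> (z k) (dd k) \<le> c) sequentially" if "c > 0" for c
    by (rule hump[OF z conv negE E0 ddL ddnn ddlim that])
  have le0: "L2_inner \<Omega> zz g \<le> c" if c: "c > 0" for c
  proof -
    have "(\<lambda>k. \<epsilon> k * L2_norm \<Omega> g + c) \<longlonglongrightarrow> 0 * L2_norm \<Omega> g + c"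
      by (intro tendsto_intros eps)
    moreover have "eventually (\<lambda>k. L2_inner \<Omega> (z k) g \<le> \<epsilon> k * L2_norm \<Omega> g + c) sequentially"
      using ev[OF c]
    proof eventually_elim
      case (elim k)
      have eq: "g = (\<lambda>x. m k x + dd k x)" by (auto simp: dd_def)
      have "L2_inner \<Omega> (z k) g = L2_inner \<Omega> (z k) (m k) + L2_inner \<Omega> (z k) (dd k)"
        by (subst eq, rule L2_inner_add_right[OF z mL ddL])
      moreover have "L2_inner \<Omega> (z k) (m k) \<le> \<epsilon> k * L2_norm \<Omega> (m k)" by (rule pos[OF mL madm])
      moreover have "\<epsilon> k * L2_norm \<Omega> (m k) \<le> \<epsilon> k * L2_norm \<Omega> g"
        by (rule mult_left_mono[OF mnorm eps0])
      ultimately show ?case using elim by linarith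
    qed
    ultimately show ?thesis by (intro tendsto_le[OF _ _ wk[OF gL]]) simp_all
  qed
  have "L2_inner \<Omega> zz g \<le> 0"
    using le0 by (meson dense not_le)
  moreover have pnn: "AE x in M \<Omega>. zz x * g x \<ge> 0" using zznn gnn by eventually_elim simp
  moreover have "L2_inner \<Omega> zz g \<ge> 0"
    unfolding L2_inner_def by (rule integral_nonneg_AE[OF pnn])
  ultimately have "integral\<^sup>L (M \<Omega>) (\<lambda>x. zz x * g x) = 0" unfolding L2_inner_def by linarith
  then have "AE x in M \<Omega>. zz x * g x = 0"
    using integral_nonneg_eq_0_iff_AE[OF L2_mult_int[OF zl gL] pnn] by simp
  then show ?thesis using zznn \<phi>bnn
    by eventually_elim (auto simp: g_def min_def max_def split: if_splits)
qed

lemma qpart: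
  assumes w: "\<And>k. w k \<in> L2 \<Omega>" and W: "W \<in> L2 \<Omega>"
  and wk: "\<And>h. h \<in> L2 \<Omega> \<Longrightarrow> (\<lambda>k. L2_inner \<Omega> (w k) h) \<longlonglongrightarrow> L2_inner \<Omega> W h"
  and eps: "\<epsilon> \<longlonglongrightarrow> 0" and eps0: "\<And>k. \<epsilon> k \<ge> 0"
  and uk: "\<And>k. u k \<in> Q" and ub: "ub \<in> Q" and QL2: "Q \<subseteq> L2 \<Omega>"
  and ulim: "(\<lambda>k. L2_norm \<Omega> (\<lambda>x. u k x - ub x)) \<longlonglongrightarrow> 0"
  and nrm: "\<And>k q. q \<in> Q \<Longrightarrow> L2_inner \<Omega> (w k) (\<lambda>x. q x - u k x) \<le> \<epsilon> k * L2_norm \<Omega> (\<lambda>x. q x - u k x)"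
  and bdd: "\<And>q. q \<in> Q \<Longrightarrow> L2_norm \<Omega> q \<le> C"
  and cL: "c \<in> L2 \<Omega>" and r: "r > 0" and ball: "\<And>v. v \<in> L2 \<Omega> \<Longrightarrow> L2_norm \<Omega> (\<lambda>x. v x - c x) < r \<Longrightarrow> v \<in> Q"
  and q: "q \<in> Q"
  shows "L2_inner \<Omega> W (\<lambda>x. q x - ub x) \<le> 0"
proof -
  have ukL: "u k \<in> L2 \<Omega>" for k using uk QL2 by blast
  have ubL: "ub \<in> L2 \<Omega>" using ub QL2 by blast
  have qL: "q \<in> L2 \<Omega>" using q QL2 by blast
  have C0: "C \<ge> 0" using bdd[OF ub] L2_norm_nonneg[of \<Omega> ub] by linarith
  have dist2C: "L2_norm \<Omega> (\<lambda>x. p x - u k x) \<le> 2 * C" if "p \<in> Q" for p k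
    using L2_norm_diff_le[of p \<Omega> "u k"] that QL2 bdd[OF that] bdd[OF uk[of k]] ukL by auto
  obtain E where E0: "E \<ge> 0" and E: "\<And>k. \<bar>\<epsilon> k\<bar> \<le> E" using conv_bounded[OF eps] by auto
  have ubcL: "(\<lambda>x. ub x - c x) \<in> L2 \<Omega>" by (intro L2_diff ubL cL)
  obtain K1 where K1: "\<And>k. \<bar>L2_inner \<Omega> (w k) (\<lambda>x. ub x - c x)\<bar> \<le> K1"
    using conv_bounded[OF wk[OF ubcL]] by auto
  define B where "B = 4 * (2 * C * E + K1) / r"
  have evu: "eventually (\<lambda>k. L2_norm \<Omega> (\<lambda>x. u k x - ub x) < r / 4) sequentially"
    using order_tendstoD(2)[OF ulim, of "r / 4"] r by simp
  have evB: "eventually (\<lambda>k. L2_norm \<Omega> (w k) \<le> B) sequentially"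
    using evu
  proof eventually_elim
    case (elim k)
    define nw where "nw = L2_norm \<Omega> (w k)"
    have nw0: "nw \<ge> 0" unfolding nw_def by (rule L2_norm_nonneg)
    have "K1 \<ge> 0" using K1[of k] by linarith
    show ?case
    proof (cases "nw = 0")
      case True
      then show ?thesis using C0 E0 \<open>K1 \<ge> 0\<close> r by (simp add: B_def nw_def)
    next
      case False
      then have nwp: "nw > 0" using nw0 by simp
      define h where "h x = (r / 2 / nw) * w k x" for x
      have hL: "h \<in> L2 \<Omega>" unfolding h_def by (intro L2_scale w)
      define p where "p x = c x + h x" for x
      have pL: "p \<in> L2 \<Omega>" unfolding p_def by (intro L2_add cL hL)
      have "L2_norm \<Omega> (\<lambda>x. p x - c x) = L2_norm \<Omega> h" by (simp add: p_def)
      also have "\<dots> = r / 2" unfolding h_def L2_norm_scale using r nwp by (simp add: nw_def)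
      finally have pQ: "p \<in> Q" using ball[OF pL] r by simp
      have wh: "L2_inner \<Omega> (w k) h = r / 2 * nw"
        unfolding h_def L2_inner_scale_right using nwp
        by (simp add: nw_def L2_norm_sq[symmetric] power2_eq_square)
      have eq1: "(\<lambda>x. p x - u k x) = (\<lambda>x. h x - ((u k x - ub x) + (ub x - c x)))"
        by (auto simp: p_def)
      have "L2_inner \<Omega> (w k) (\<lambda>x. p x - u k x) =
          L2_inner \<Omega> (w k) h - (L2_inner \<Omega> (w k) (\<lambda>x. u k x - ub x) + L2_inner \<Omega> (w k) (\<lambda>x. ub x - c x))"
        unfolding eq1
        by (simp add: L2_inner_diff_right L2_inner_add_right hL w L2_add L2_diff ukL ubL cL)
      moreover have "L2_inner \<Omega> (w k) (\<lambda>x. p x - u k x) \<le> E * (2 * C)"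
      proof -
        have "L2_inner \<Omega> (w k) (\<lambda>x. p x - u k x) \<le> \<epsilon> k * L2_norm \<Omega> (\<lambda>x. p x - u k x)" by (rule nrm[OF pQ])
        also have "\<dots> \<le> E * (2 * C)"
          using E[of k] eps0[of k] dist2C[OF pQ, of k] L2_norm_nonneg[of \<Omega> "\<lambda>x. p x - u k x"]
          by (intro mult_mono) auto
        finally show ?thesis .
      qed
      moreover have "L2_inner \<Omega> (w k) (\<lambda>x. u k x - ub x) \<le> nw * (r / 4)"
      proof -
        have "L2_inner \<Omega> (w k) (\<lambda>x. u k x - ub x) \<le> nw * L2_norm \<Omega> (\<lambda>x. u k x - ub x)"
          unfolding nw_def by (rule L2_CS[OF w L2_diff[OF ukL ubL]])
        also have "\<dots> \<le> nw * (r / 4)" using elim nw0 by (intro mult_left_mono) auto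
        finally show ?thesis .
      qed
      moreover have "L2_inner \<Omega> (w k) (\<lambda>x. ub x - c x) \<le> K1" using K1[of k] by linarith
      ultimately have "r / 2 * nw \<le> E * (2 * C) + nw * (r / 4) + K1" using wh by linarith
      then have "r / 4 * nw \<le> 2 * C * E + K1" by (simp add: algebra_simps)
      then have "nw \<le> 4 * (2 * C * E + K1) / r" using r by (simp add: field_simps)
      then show ?thesis by (simp add: B_def nw_def)
    qed
  qed
  have qLd: "(\<lambda>x. q x - ub x) \<in> L2 \<Omega>" by (intro L2_diff qL ubL)
  have "(\<lambda>k. \<epsilon> k * (2 * C) + B * L2_norm \<Omega> (\<lambda>x. u k x - ub x)) \<longlonglongrightarrow> 0 * (2 * C) + B * 0"
    by (intro tendsto_intros eps ulim)
  moreover have "eventually (\<lambda>k. L2_inner \<Omega> (w k) (\<lambda>x. q x - ub x) \<le> \<epsilon> k * (2 * C) + B * L2_norm \<Omega> (\<lambda>x. u k x - ub x)) sequentially"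
    using evB
  proof eventually_elim
    case (elim k)
    have eq: "(\<lambda>x. q x - ub x) = (\<lambda>x. (q x - u k x) + (u k x - ub x))" by auto
    have "L2_inner \<Omega> (w k) (\<lambda>x. q x - ub x) = L2_inner \<Omega> (w k) (\<lambda>x. q x - u k x) + L2_inner \<Omega> (w k) (\<lambda>x. u k x - ub x)"
      unfolding eq by (rule L2_inner_add_right) (intro w L2_diff qL ukL ubL)+
    moreover have "L2_inner \<Omega> (w k) (\<lambda>x. q x - u k x) \<le> \<epsilon> k * (2 * C)"
      using nrm[OF q, of k] mult_left_mono[OF dist2C[OF q, of k] eps0[of k]] by linarith
    moreover have "L2_inner \<Omega> (w k) (\<lambda>x. u k x - ub x) \<le> B * L2_norm \<Omega> (\<lambda>x. u k x - ub x)"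
    proof -
      have "L2_inner \<Omega> (w k) (\<lambda>x. u k x - ub x) \<le> L2_norm \<Omega> (w k) * L2_norm \<Omega> (\<lambda>x. u k x - ub x)"
        by (rule L2_CS[OF w L2_diff[OF ukL ubL]])
      also have "\<dots> \<le> B * L2_norm \<Omega> (\<lambda>x. u k x - ub x)"
        using elim by (intro mult_right_mono L2_norm_nonneg)
      finally show ?thesis .
    qed
    ultimately show ?case by linarith
  qed
  ultimately show ?thesis by (intro tendsto_le[OF _ _ wk[OF qLd]]) simp_all
qed

definition Rset where
 "Rset \<Omega> \<alpha> \<beta> Q ebar ubar us = {(esy, esJ, esa, esb). (esy, esJ, esa, esb) \<in> Espace \<Omega>
                \<and> (AE x in M \<Omega>. esy x = 0) \<and> (AE x in M \<Omega>. esJ x = 0)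
                \<and> (\<exists>u1 u2. u1 \<in> L2 \<Omega> \<and> u2 \<in> conv_normal \<Omega> ubar Q
                      \<and> (AE x in M \<Omega>. us x = u1 x - u2 x)
                      \<and> (AE x in M \<Omega>. u1 x = esa x + esb x))
                \<and> (AE x in M \<Omega>. x \<in> Omega1 \<Omega> \<alpha> ebar ubar \<longrightarrow> esa x \<ge> 0)
                \<and> (AE x in M \<Omega>. x \<notin> Omega1 \<Omega> \<alpha> ebar ubar \<longrightarrow> esa x = 0)
                \<and> (AE x in M \<Omega>. x \<in> Omega3 \<Omega> \<beta> ebar ubar \<longrightarrow> esb x \<le> 0)
                \<and> (AE x in M \<Omega>. x \<notin> Omega3 \<Omega> \<beta> ebar ubar \<longrightarrow> esb x = 0)}"

lemma gnorm_nonneg: "gnorm \<Omega> ((a1,a2,a3,a4),u) \<ge> 0"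
  unfolding gnorm_simp by (intro real_sqrt_ge_zero add_nonneg_nonneg L2_inner_self_nonneg)

lemma regular_sub_limiting:
  assumes pS: "(ebar, ubar) \<in> gph \<Omega> G"
  and es: "es \<in> regular_coderiv \<Omega> G ebar ubar us"
  shows "es \<in> limiting_coderiv \<Omega> G ebar ubar us"
proof -
  obtain ey0 eJ0 ea0 eb0 where eb: "ebar = (ey0, eJ0, ea0, eb0)" by (cases ebar) auto
  have ps: "(es, \<lambda>x. - us x) \<in> eps_normal \<Omega> 0 (gph \<Omega> G) (ebar, ubar)"
    using es by (simp add: regular_coderiv_def frechet_normal_def)
  then have gs: "(es, \<lambda>x. - us x) \<in> gspace \<Omega>" using pS by (simp add: eps_normal_def)
  have z: "gnorm \<Omega> (gsub (ebar, ubar) (ebar, ubar)) = 0"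
    unfolding eb gsub_simp gnorm_simp by simp
  have ex: "\<exists>\<epsilon> pk psk. (\<forall>k. \<epsilon> k \<ge> 0 \<and> pk k \<in> gph \<Omega> G \<and> psk k \<in> eps_normal \<Omega> (\<epsilon> k) (gph \<Omega> G) (pk k)) \<and>
        \<epsilon> \<longlonglongrightarrow> 0 \<and> (\<lambda>k. gnorm \<Omega> (gsub (pk k) (ebar, ubar))) \<longlonglongrightarrow> 0 \<and>
        (\<forall>v\<in>gspace \<Omega>. (\<lambda>k. ginner \<Omega> (psk k) v) \<longlonglongrightarrow> ginner \<Omega> (es, \<lambda>x. - us x) v)"
    by (rule exI[of _ "\<lambda>k. 0"], rule exI[of _ "\<lambda>k. (ebar, ubar)"], rule exI[of _ "\<lambda>k. (es, \<lambda>x. - us x)"])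
      (use pS ps z in simp)
  show ?thesis
    unfolding limiting_coderiv_def limiting_normal_def using pS gs ex by simp
qed

lemma R_sub_regular:
  assumes eb: "ebar = (ey0, eJ0, ea0, eb0)" and ebar: "ebar \<in> Espace \<Omega>"
  and ubG: "ubar \<in> Gmap \<Omega> \<alpha> \<beta> Q ebar" and us: "us \<in> L2 \<Omega>"
  and es: "es \<in> Rset \<Omega> \<alpha> \<beta> Q ebar ubar us"
  shows "es \<in> regular_coderiv \<Omega> (Gmap \<Omega> \<alpha> \<beta> Q) ebar ubar us"
proof -
  obtain esy esJ esa esb where esd: "es = (esy, esJ, esa, esb)" by (cases es) auto
  have esE: "(esy, esJ, esa, esb) \<in> Espace \<Omega>"
    and y0: "AE x in M \<Omega>. esy x = 0" and J0: "AE x in M \<Omega>. esJ x = 0"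
    and a1: "AE x in M \<Omega>. x \<in> Omega1 \<Omega> \<alpha> ebar ubar \<longrightarrow> esa x \<ge> 0"
    and a2: "AE x in M \<Omega>. x \<notin> Omega1 \<Omega> \<alpha> ebar ubar \<longrightarrow> esa x = 0"
    and b1: "AE x in M \<Omega>. x \<in> Omega3 \<Omega> \<beta> ebar ubar \<longrightarrow> esb x \<le> 0"
    and b2: "AE x in M \<Omega>. x \<notin> Omega3 \<Omega> \<beta> ebar ubar \<longrightarrow> esb x = 0"
    using es unfolding esd Rset_def by auto
  obtain u1 u2 where u1: "u1 \<in> L2 \<Omega>" and u2: "u2 \<in> conv_normal \<Omega> ubar Q"
    and uu: "AE x in M \<Omega>. us x = u1 x - u2 x" and u1e: "AE x in M \<Omega>. u1 x = esa x + esb x"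
    using es unfolding esd Rset_def by auto
  have esL: "esy \<in> L2 \<Omega>" "esJ \<in> L2 \<Omega>" "esa \<in> L2 \<Omega>" "esb \<in> L2 \<Omega>" using esE by (auto simp: Espace_def)
  have e0L: "ey0 \<in> L2 \<Omega>" "eJ0 \<in> L2 \<Omega>" "ea0 \<in> L2 \<Omega>" "eb0 \<in> L2 \<Omega>" using ebar eb by (auto simp: Espace_def)
  have ubQ: "ubar \<in> Q" and u2L: "u2 \<in> L2 \<Omega>" and u2N: "\<forall>u\<in>Q. L2_inner \<Omega> u2 (\<lambda>x. u x - ubar x) \<le> 0"
    using u2 by (auto simp: conv_normal_def split: if_splits)
  have ubL: "ubar \<in> L2 \<Omega>" using ubG eb by (auto simp: Gmap_def Uad_def)
  have pS: "((ey0, eJ0, ea0, eb0), ubar) \<in> gph \<Omega> (Gmap \<Omega> \<alpha> \<beta> Q)"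
    using ebar ubG eb by (simp add: gph_def)
  have gs: "((esy, esJ, esa, esb), \<lambda>x. - us x) \<in> gspace \<Omega>"
    using esE L2_uminus[OF us] by (simp add: gspace_def)
  have key: "ginner \<Omega> ((esy, esJ, esa, esb), \<lambda>x. - us x) (gsub q ((ey0, eJ0, ea0, eb0), ubar)) \<le> 0"
    if q: "q \<in> gph \<Omega> (Gmap \<Omega> \<alpha> \<beta> Q)" for q
  proof -
    obtain a1 a2 a3 a4 uq where qd: "q = ((a1, a2, a3, a4), uq)" by (metis prod.collapse)
    have qL: "a1 \<in> L2 \<Omega>" "a2 \<in> L2 \<Omega>" "a3 \<in> L2 \<Omega>" "a4 \<in> L2 \<Omega>" "uq \<in> L2 \<Omega>"
      and qc: "AE x in M \<Omega>. \<alpha> x + a3 x \<le> uq x \<and> uq x \<le> \<beta> x + a4 x" and uqQ: "uq \<in> Q"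
      using q unfolding qd S_mem by auto
    have d1: "(\<lambda>x. a1 x - ey0 x) \<in> L2 \<Omega>" "(\<lambda>x. a2 x - eJ0 x) \<in> L2 \<Omega>"
      "(\<lambda>x. a3 x - ea0 x) \<in> L2 \<Omega>" "(\<lambda>x. a4 x - eb0 x) \<in> L2 \<Omega>" "(\<lambda>x. uq x - ubar x) \<in> L2 \<Omega>"
      using qL e0L ubL by (auto intro: L2_diff)
    have iy: "L2_inner \<Omega> esy (\<lambda>x. a1 x - ey0 x) = 0"
    proof -
      have "L2_inner \<Omega> esy (\<lambda>x. a1 x - ey0 x) = L2_inner \<Omega> (\<lambda>x. 0) (\<lambda>x. a1 x - ey0 x)"
        by (rule L2_inner_cong_AE) (use y0 esL d1 L2_meas in auto)
      then show ?thesis by simp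
    qed
    have iJ: "L2_inner \<Omega> esJ (\<lambda>x. a2 x - eJ0 x) = 0"
    proof -
      have "L2_inner \<Omega> esJ (\<lambda>x. a2 x - eJ0 x) = L2_inner \<Omega> (\<lambda>x. 0) (\<lambda>x. a2 x - eJ0 x)"
        by (rule L2_inner_cong_AE) (use J0 esL d1 L2_meas in auto)
      then show ?thesis by simp
    qed
    define v where "v x = u2 x - esa x - esb x" for x
    have vL: "v \<in> L2 \<Omega>" unfolding v_def by (intro L2_diff u2L esL)
    have iu: "L2_inner \<Omega> (\<lambda>x. - us x) (\<lambda>x. uq x - ubar x) = L2_inner \<Omega> v (\<lambda>x. uq x - ubar x)"
    proof (rule L2_inner_cong_AE)
      show "AE x in M \<Omega>. - us x = v x" using uu u1e by eventually_elim (simp add: v_def)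
    qed (use us vL d1 L2_meas L2_uminus in auto)
    define F where "F x = esa x * ((a3 x - uq x) - (ea0 x - ubar x)) + esb x * ((a4 x - uq x) - (eb0 x - ubar x))" for x
    have FL: "integrable (M \<Omega>) F"
      unfolding F_def
      by (intro Bochner_Integration.integrable_add L2_mult_int esL L2_diff qL e0L ubL)
    have Fle: "AE x in M \<Omega>. F x \<le> 0"
      using a1 a2 b1 b2 qc
    proof eventually_elim
      case (elim x)
      have t1: "esa x * ((a3 x - uq x) - (ea0 x - ubar x)) \<le> 0"
      proof (cases "x \<in> Omega1 \<Omega> \<alpha> ebar ubar")
        case True
        then have "ubar x = \<alpha> x + ea0 x" "esa x \<ge> 0" using elim by (auto simp: Omega1_def eb)
        moreover have "(a3 x - uq x) - (ea0 x - ubar x) \<le> 0" using elim calculation by linarith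
        ultimately show ?thesis by (simp add: mult_nonneg_nonpos)
      next
        case False then show ?thesis using elim by simp
      qed
      have t2: "esb x * ((a4 x - uq x) - (eb0 x - ubar x)) \<le> 0"
      proof (cases "x \<in> Omega3 \<Omega> \<beta> ebar ubar")
        case True
        then have "ubar x = \<beta> x + eb0 x" "esb x \<le> 0" using elim by (auto simp: Omega3_def eb)
        moreover have "(a4 x - uq x) - (eb0 x - ubar x) \<ge> 0" using elim calculation by linarith
        ultimately show ?thesis by (simp add: mult_nonpos_nonneg)
      next
        case False then show ?thesis using elim by simp
      qed
      show ?case using t1 t2 by (simp add: F_def)
    qed
    have sum_eq: "L2_inner \<Omega> esa (\<lambda>x. a3 x - ea0 x) + L2_inner \<Omega> esb (\<lambda>x. a4 x - eb0 x)
        + L2_inner \<Omega> v (\<lambda>x. uq x - ubar x) = integral\<^sup>L (M \<Omega>) F + L2_inner \<Omega> u2 (\<lambda>x. uq x - ubar x)"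
    proof -
      have i1: "integrable (M \<Omega>) (\<lambda>x. esa x * (a3 x - ea0 x))" by (intro L2_mult_int esL d1)
      have i2: "integrable (M \<Omega>) (\<lambda>x. esb x * (a4 x - eb0 x))" by (intro L2_mult_int esL d1)
      have i3: "integrable (M \<Omega>) (\<lambda>x. v x * (uq x - ubar x))" by (intro L2_mult_int vL d1)
      have i4: "integrable (M \<Omega>) (\<lambda>x. u2 x * (uq x - ubar x))" by (intro L2_mult_int u2L d1)
      have "L2_inner \<Omega> esa (\<lambda>x. a3 x - ea0 x) + L2_inner \<Omega> esb (\<lambda>x. a4 x - eb0 x)
        + L2_inner \<Omega> v (\<lambda>x. uq x - ubar x) =
        integral\<^sup>L (M \<Omega>) (\<lambda>x. esa x * (a3 x - ea0 x) + esb x * (a4 x - eb0 x) + v x * (uq x - ubar x))"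
        unfolding L2_inner_def using i1 i2 i3 by simp
      also have "(\<lambda>x. esa x * (a3 x - ea0 x) + esb x * (a4 x - eb0 x) + v x * (uq x - ubar x))
          = (\<lambda>x. F x + u2 x * (uq x - ubar x))"
        by (auto simp: F_def v_def algebra_simps)
      also have "integral\<^sup>L (M \<Omega>) (\<lambda>x. F x + u2 x * (uq x - ubar x)) = integral\<^sup>L (M \<Omega>) F + L2_inner \<Omega> u2 (\<lambda>x. uq x - ubar x)"
        unfolding L2_inner_def using FL i4 by simp
      finally show ?thesis .
    qed
    have "integral\<^sup>L (M \<Omega>) F \<le> 0"
    proof -
      have "0 \<le> integral\<^sup>L (M \<Omega>) (\<lambda>x. - F x)" by (rule integral_nonneg_AE) (use Fle in \<open>auto elim: eventually_mono\<close>)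
      then show ?thesis by simp
    qed
    moreover have "L2_inner \<Omega> u2 (\<lambda>x. uq x - ubar x) \<le> 0" using u2N uqQ by blast
    ultimately show ?thesis
      unfolding qd gsub_simp ginner_simp using iy iJ iu sum_eq by linarith
  qed
  have fin: "((esy, esJ, esa, esb), \<lambda>x. - us x) \<in> eps_normal \<Omega> 0 (gph \<Omega> (Gmap \<Omega> \<alpha> \<beta> Q)) ((ey0, eJ0, ea0, eb0), ubar)"
  proof -
    have "((esy, esJ, esa, esb), \<lambda>x. - us x) \<in> eps_normal \<Omega> 0 (gph \<Omega> (Gmap \<Omega> \<alpha> \<beta> Q)) ((ey0, eJ0, ea0, eb0), ubar)"
      unfolding eps_normal_def using pS gs
    proof (simp, intro allI impI)
      fix \<eta> :: real assume "0 < \<eta>"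
      show "\<exists>\<delta>>0. \<forall>q\<in>gph \<Omega> (Gmap \<Omega> \<alpha> \<beta> Q). gnorm \<Omega> (gsub q ((ey0, eJ0, ea0, eb0), ubar)) < \<delta> \<longrightarrow>
          ginner \<Omega> ((esy, esJ, esa, esb), \<lambda>x. - us x) (gsub q ((ey0, eJ0, ea0, eb0), ubar))
          \<le> \<eta> * gnorm \<Omega> (gsub q ((ey0, eJ0, ea0, eb0), ubar))"
      proof (intro exI[of _ 1] conjI ballI impI)
        fix q assume q: "q \<in> gph \<Omega> (Gmap \<Omega> \<alpha> \<beta> Q)"
        obtain a1 a2 a3 a4 uq where qd: "q = ((a1, a2, a3, a4), uq)" by (metis prod.collapse)
        have "0 \<le> gnorm \<Omega> (gsub q ((ey0, eJ0, ea0, eb0), ubar))"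
          unfolding qd gsub_simp by (rule gnorm_nonneg)
        then show "ginner \<Omega> ((esy, esJ, esa, esb), \<lambda>x. - us x) (gsub q ((ey0, eJ0, ea0, eb0), ubar))
          \<le> \<eta> * gnorm \<Omega> (gsub q ((ey0, eJ0, ea0, eb0), ubar))"
          using key[OF q] \<open>0 < \<eta>\<close> by (meson mult_nonneg_nonneg less_imp_le order_trans)
      qed simp
    qed
    then show ?thesis .
  qed
  show ?thesis using fin eb esd by (simp add: regular_coderiv_def frechet_normal_def)
qed

lemma limiting_sub_R:
  assumes eb: "ebar = (ey0, eJ0, ea0, eb0)" and ebar: "ebar \<in> Espace \<Omega>"
  and ubG: "ubar \<in> Gmap \<Omega> \<alpha> \<beta> Q ebar"
  and \<alpha>m: "\<alpha> \<in> borel_measurable (M \<Omega>)" and \<beta>m: "\<beta> \<in> borel_measurable (M \<Omega>)"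
  and QL2: "Q \<subseteq> L2 \<Omega>" and Qc: "L2_convex Q" and Qb: "L2_bounded \<Omega> Q"
  and CQ: "\<exists>e \<in> Espace \<Omega>. Uad \<Omega> \<alpha> \<beta> e \<inter> L2_interior \<Omega> Q \<noteq> {}"
  and es: "es \<in> limiting_coderiv \<Omega> (Gmap \<Omega> \<alpha> \<beta> Q) ebar ubar us"
  shows "es \<in> Rset \<Omega> \<alpha> \<beta> Q ebar ubar us"
proof -
  obtain Y J A B where esd: "es = (Y, J, A, B)" by (metis prod.collapse)
  have ubL: "ubar \<in> L2 \<Omega>" and ubQ: "ubar \<in> Q"
    and ubc: "AE x in M \<Omega>. \<alpha> x + ea0 x \<le> ubar x \<and> ubar x \<le> \<beta> x + eb0 x"
    using ubG eb by (auto simp: Gmap_def Uad_def)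
  have e0L: "ey0 \<in> L2 \<Omega>" "eJ0 \<in> L2 \<Omega>" "ea0 \<in> L2 \<Omega>" "eb0 \<in> L2 \<Omega>"
    using ebar eb by (auto simp: Espace_def)
  have pS: "((ey0, eJ0, ea0, eb0), ubar) \<in> gph \<Omega> (Gmap \<Omega> \<alpha> \<beta> Q)"
    using ebar ubG eb by (simp add: gph_def)
  have ln: "((Y, J, A, B), \<lambda>x. - us x) \<in> limiting_normal \<Omega> (gph \<Omega> (Gmap \<Omega> \<alpha> \<beta> Q)) ((ey0, eJ0, ea0, eb0), ubar)"
    using es esd eb by (simp add: limiting_coderiv_def)
  then have gs: "((Y, J, A, B), \<lambda>x. - us x) \<in> gspace \<Omega>"
    and "\<exists>\<epsilon> pk psk. (\<forall>k. \<epsilon> k \<ge> 0 \<and> pk k \<in> gph \<Omega> (Gmap \<Omega> \<alpha> \<beta> Q) \<and>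
          psk k \<in> eps_normal \<Omega> (\<epsilon> k) (gph \<Omega> (Gmap \<Omega> \<alpha> \<beta> Q)) (pk k)) \<and>
        \<epsilon> \<longlonglongrightarrow> 0 \<and> (\<lambda>k. gnorm \<Omega> (gsub (pk k) ((ey0, eJ0, ea0, eb0), ubar))) \<longlonglongrightarrow> 0 \<and>
        (\<forall>v\<in>gspace \<Omega>. (\<lambda>k. ginner \<Omega> (psk k) v) \<longlonglongrightarrow> ginner \<Omega> ((Y, J, A, B), \<lambda>x. - us x) v)"
    using pS by (simp_all add: limiting_normal_def)
  then obtain \<epsilon> pk psk where epsk: "\<And>k. \<epsilon> k \<ge> 0 \<and> pk k \<in> gph \<Omega> (Gmap \<Omega> \<alpha> \<beta> Q) \<and>
          psk k \<in> eps_normal \<Omega> (\<epsilon> k) (gph \<Omega> (Gmap \<Omega> \<alpha> \<beta> Q)) (pk k)"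
    and eps: "\<epsilon> \<longlonglongrightarrow> 0" and pkl: "(\<lambda>k. gnorm \<Omega> (gsub (pk k) ((ey0, eJ0, ea0, eb0), ubar))) \<longlonglongrightarrow> 0"
    and wkc: "\<And>v. v \<in> gspace \<Omega> \<Longrightarrow> (\<lambda>k. ginner \<Omega> (psk k) v) \<longlonglongrightarrow> ginner \<Omega> ((Y, J, A, B), \<lambda>x. - us x) v"
    by blast
  define ey where "ey k = fst (fst (pk k))" for k
  define eJ where "eJ k = fst (snd (fst (pk k)))" for k
  define ea where "ea k = fst (snd (snd (fst (pk k))))" for k
  define ebb where "ebb k = snd (snd (snd (fst (pk k))))" for k
  define u where "u k = snd (pk k)" for k
  have pk_eq: "pk k = ((ey k, eJ k, ea k, ebb k), u k)" for k
    by (simp add: ey_def eJ_def ea_def ebb_def u_def)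
  define Yk where "Yk k = fst (fst (psk k))" for k
  define Jk where "Jk k = fst (snd (fst (psk k)))" for k
  define Ak where "Ak k = fst (snd (snd (fst (psk k))))" for k
  define Bk where "Bk k = snd (snd (snd (fst (psk k))))" for k
  define Uk where "Uk k = snd (psk k)" for k
  have psk_eq: "psk k = ((Yk k, Jk k, Ak k, Bk k), Uk k)" for k
    by (simp add: Yk_def Jk_def Ak_def Bk_def Uk_def)
  have eps0: "\<epsilon> k \<ge> 0" for k using epsk by blast
  have pkS: "((ey k, eJ k, ea k, ebb k), u k) \<in> gph \<Omega> (Gmap \<Omega> \<alpha> \<beta> Q)" for k
    using epsk[of k] by (simp add: pk_eq)
  have ekL: "ey k \<in> L2 \<Omega>" "eJ k \<in> L2 \<Omega>" "ea k \<in> L2 \<Omega>" "ebb k \<in> L2 \<Omega>" "u k \<in> L2 \<Omega>"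
    and ukc: "AE x in M \<Omega>. \<alpha> x + ea k x \<le> u k x \<and> u k x \<le> \<beta> x + ebb k x" and ukQ: "u k \<in> Q" for k
    using pkS[of k] unfolding S_mem by auto
  have pskN: "((Yk k, Jk k, Ak k, Bk k), Uk k) \<in> eps_normal \<Omega> (\<epsilon> k) (gph \<Omega> (Gmap \<Omega> \<alpha> \<beta> Q)) ((ey k, eJ k, ea k, ebb k), u k)" for k
    using epsk[of k] by (simp add: pk_eq psk_eq)
  have pskL: "Yk k \<in> L2 \<Omega>" "Jk k \<in> L2 \<Omega>" "Ak k \<in> L2 \<Omega>" "Bk k \<in> L2 \<Omega>" "Uk k \<in> L2 \<Omega>" for k
    using pskN[of k] pkS[of k] by (auto simp: eps_normal_def gspace_def Espace_def)
  have psL: "Y \<in> L2 \<Omega>" "J \<in> L2 \<Omega>" "A \<in> L2 \<Omega>" "B \<in> L2 \<Omega>" "(\<lambda>x. - us x) \<in> L2 \<Omega>"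
    using gs by (auto simp: gspace_def Espace_def)
  have dir: "L2_inner \<Omega> (Yk k) h1 + L2_inner \<Omega> (Jk k) h2 + L2_inner \<Omega> (Ak k) h3 + L2_inner \<Omega> (Bk k) h4 + L2_inner \<Omega> (Uk k) h5
     \<le> \<epsilon> k * sqrt (L2_inner \<Omega> h1 h1 + L2_inner \<Omega> h2 h2 + L2_inner \<Omega> h3 h3 + L2_inner \<Omega> h4 h4 + L2_inner \<Omega> h5 h5)"
    if "\<And>t. 0 < t \<Longrightarrow> t \<le> 1 \<Longrightarrow> ((\<lambda>x. ey k x + t*h1 x, \<lambda>x. eJ k x + t*h2 x, \<lambda>x. ea k x + t*h3 x,
      \<lambda>x. ebb k x + t*h4 x), \<lambda>x. u k x + t*h5 x) \<in> gph \<Omega> (Gmap \<Omega> \<alpha> \<beta> Q)" for k h1 h2 h3 h4 h5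
    by (rule eps_dir[OF pskN that])
  have z0: "(\<lambda>x. 0::real) \<in> L2 \<Omega>" by (rule L2_zero)
  have wY: "(\<lambda>k. L2_inner \<Omega> (Yk k) h) \<longlonglongrightarrow> L2_inner \<Omega> Y h" if "h \<in> L2 \<Omega>" for h
    using wkc[of "((h, \<lambda>x. 0, \<lambda>x. 0, \<lambda>x. 0), \<lambda>x. 0)"] that z0
    by (simp add: gspace_def Espace_def psk_eq ginner_simp)
  have wJ: "(\<lambda>k. L2_inner \<Omega> (Jk k) h) \<longlonglongrightarrow> L2_inner \<Omega> J h" if "h \<in> L2 \<Omega>" for h
    using wkc[of "((\<lambda>x. 0, h, \<lambda>x. 0, \<lambda>x. 0), \<lambda>x. 0)"] that z0
    by (simp add: gspace_def Espace_def psk_eq ginner_simp)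
  have wA: "(\<lambda>k. L2_inner \<Omega> (Ak k) h) \<longlonglongrightarrow> L2_inner \<Omega> A h" if "h \<in> L2 \<Omega>" for h
    using wkc[of "((\<lambda>x. 0, \<lambda>x. 0, h, \<lambda>x. 0), \<lambda>x. 0)"] that z0
    by (simp add: gspace_def Espace_def psk_eq ginner_simp)
  have wB: "(\<lambda>k. L2_inner \<Omega> (Bk k) h) \<longlonglongrightarrow> L2_inner \<Omega> B h" if "h \<in> L2 \<Omega>" for h
    using wkc[of "((\<lambda>x. 0, \<lambda>x. 0, \<lambda>x. 0, h), \<lambda>x. 0)"] that z0
    by (simp add: gspace_def Espace_def psk_eq ginner_simp)
  have wABU: "(\<lambda>k. L2_inner \<Omega> (Ak k) h + L2_inner \<Omega> (Bk k) h + L2_inner \<Omega> (Uk k) h) \<longlonglongrightarrow>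
      L2_inner \<Omega> A h + L2_inner \<Omega> B h + L2_inner \<Omega> (\<lambda>x. - us x) h" if "h \<in> L2 \<Omega>" for h
    using wkc[of "((\<lambda>x. 0, \<lambda>x. 0, h, h), h)"] that z0
    by (simp add: gspace_def Espace_def psk_eq ginner_simp add.assoc)
  have gn_ge: "L2_norm \<Omega> (\<lambda>x. ea k x - ea0 x) \<le> gnorm \<Omega> (gsub (pk k) ((ey0, eJ0, ea0, eb0), ubar))
     \<and> L2_norm \<Omega> (\<lambda>x. ebb k x - eb0 x) \<le> gnorm \<Omega> (gsub (pk k) ((ey0, eJ0, ea0, eb0), ubar))
     \<and> L2_norm \<Omega> (\<lambda>x. u k x - ubar x) \<le> gnorm \<Omega> (gsub (pk k) ((ey0, eJ0, ea0, eb0), ubar))" for k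
    unfolding pk_eq gsub_simp gnorm_simp L2_norm_def
    using L2_inner_self_nonneg[of \<Omega>] by (intro conjI real_sqrt_le_mono) (smt (verit))+
  have lim_of: "(\<lambda>k. L2_norm \<Omega> (f k)) \<longlonglongrightarrow> 0"
    if "\<And>k. L2_norm \<Omega> (f k) \<le> gnorm \<Omega> (gsub (pk k) ((ey0, eJ0, ea0, eb0), ubar))" for f
  proof (rule tendsto_sandwich[OF _ _ tendsto_const pkl])
    show "\<forall>\<^sub>F n in sequentially. 0 \<le> L2_norm \<Omega> (f n)" by (simp add: L2_norm_nonneg)
    show "\<forall>\<^sub>F n in sequentially. L2_norm \<Omega> (f n) \<le> gnorm \<Omega> (gsub (pk n) ((ey0, eJ0, ea0, eb0), ubar))"
      using that by simp
  qed
  have nA: "(\<lambda>k. L2_norm \<Omega> (\<lambda>x. ea k x - ea0 x)) \<longlonglongrightarrow> 0" by (rule lim_of) (use gn_ge in blast)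
  have nB: "(\<lambda>k. L2_norm \<Omega> (\<lambda>x. ebb k x - eb0 x)) \<longlonglongrightarrow> 0" by (rule lim_of) (use gn_ge in blast)
  have nU: "(\<lambda>k. L2_norm \<Omega> (\<lambda>x. u k x - ubar x)) \<longlonglongrightarrow> 0" by (rule lim_of) (use gn_ge in blast)
  have Y0: "AE x in M \<Omega>. Y x = 0"
  proof (rule weak_zero[OF psL(1) wY _ eps])
    fix k h assume h: "h \<in> L2 \<Omega>"
    have "L2_inner \<Omega> (Yk k) h + L2_inner \<Omega> (Jk k) (\<lambda>x. 0) + L2_inner \<Omega> (Ak k) (\<lambda>x. 0) + L2_inner \<Omega> (Bk k) (\<lambda>x. 0) + L2_inner \<Omega> (Uk k) (\<lambda>x. 0)
     \<le> \<epsilon> k * sqrt (L2_inner \<Omega> h h + L2_inner \<Omega> (\<lambda>x. 0) (\<lambda>x. 0) + L2_inner \<Omega> (\<lambda>x. 0) (\<lambda>x. 0) + L2_inner \<Omega> (\<lambda>x. 0) (\<lambda>x. 0) + L2_inner \<Omega> (\<lambda>x. 0) (\<lambda>x. 0))"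
      by (rule dir) (use pkS ekL h in \<open>auto simp: S_mem intro!: L2_add L2_scale\<close>)
    then show "L2_inner \<Omega> (Yk k) h \<le> \<epsilon> k * L2_norm \<Omega> h" by (simp add: L2_norm_def)
  qed
  have J0: "AE x in M \<Omega>. J x = 0"
  proof (rule weak_zero[OF psL(2) wJ _ eps])
    fix k h assume h: "h \<in> L2 \<Omega>"
    have "L2_inner \<Omega> (Yk k) (\<lambda>x. 0) + L2_inner \<Omega> (Jk k) h + L2_inner \<Omega> (Ak k) (\<lambda>x. 0) + L2_inner \<Omega> (Bk k) (\<lambda>x. 0) + L2_inner \<Omega> (Uk k) (\<lambda>x. 0)
     \<le> \<epsilon> k * sqrt (L2_inner \<Omega> (\<lambda>x. 0) (\<lambda>x. 0) + L2_inner \<Omega> h h + L2_inner \<Omega> (\<lambda>x. 0) (\<lambda>x. 0) + L2_inner \<Omega> (\<lambda>x. 0) (\<lambda>x. 0) + L2_inner \<Omega> (\<lambda>x. 0) (\<lambda>x. 0))"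
      by (rule dir) (use pkS ekL h in \<open>auto simp: S_mem intro!: L2_add L2_scale\<close>)
    then show "L2_inner \<Omega> (Jk k) h \<le> \<epsilon> k * L2_norm \<Omega> h" by (simp add: L2_norm_def)
  qed
  have normneg: "L2_inner \<Omega> (\<lambda>x. - f x) (\<lambda>x. - f x) = L2_inner \<Omega> f f" for f
    by (simp add: L2_inner_minus_left L2_inner_minus_right)
  have cA: "AE x in M \<Omega>. A x \<ge> 0 \<and> (ubar x - \<alpha> x - ea0 x > 0 \<longrightarrow> A x = 0)"
  proof (rule cone_lim[where \<phi>k = "\<lambda>k x. u k x - \<alpha> x - ea k x" and \<phi>b = "\<lambda>x. ubar x - \<alpha> x - ea0 x",
        OF pskL(3) psL(3) wA eps eps0])
    fix k \<phi> assume \<phi>: "\<phi> \<in> L2 \<Omega>" "AE x in M \<Omega>. \<phi> x \<ge> 0"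
    have "L2_inner \<Omega> (Yk k) (\<lambda>x. 0) + L2_inner \<Omega> (Jk k) (\<lambda>x. 0) + L2_inner \<Omega> (Ak k) (\<lambda>x. - \<phi> x) + L2_inner \<Omega> (Bk k) (\<lambda>x. 0) + L2_inner \<Omega> (Uk k) (\<lambda>x. 0)
     \<le> \<epsilon> k * sqrt (L2_inner \<Omega> (\<lambda>x. 0) (\<lambda>x. 0) + L2_inner \<Omega> (\<lambda>x. 0) (\<lambda>x. 0) + L2_inner \<Omega> (\<lambda>x. - \<phi> x) (\<lambda>x. - \<phi> x) + L2_inner \<Omega> (\<lambda>x. 0) (\<lambda>x. 0) + L2_inner \<Omega> (\<lambda>x. 0) (\<lambda>x. 0))"
    proof (rule dir)
      fix t :: real assume t: "0 < t" "t \<le> 1"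
      have "AE x in M \<Omega>. \<alpha> x + (ea k x + t * - \<phi> x) \<le> u k x \<and> u k x \<le> \<beta> x + ebb k x"
        using ukc[of k] \<phi>(2)
      proof eventually_elim
        case (elim x)
        have "0 \<le> t * \<phi> x" using elim t by simp
        then show ?case using elim by linarith
      qed
      then show "((\<lambda>x. ey k x + t * 0, \<lambda>x. eJ k x + t * 0, \<lambda>x. ea k x + t * - \<phi> x, \<lambda>x. ebb k x + t * 0), \<lambda>x. u k x + t * 0)
          \<in> gph \<Omega> (Gmap \<Omega> \<alpha> \<beta> Q)"
        using ekL ukQ \<phi>(1) by (simp add: S_mem L2_add L2_scale L2_uminus L2_diff)
    qed
    moreover have "L2_inner \<Omega> (\<lambda>x. - \<phi> x) (\<lambda>x. - \<phi> x) = L2_inner \<Omega> \<phi> \<phi>" by (rule normneg)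
    moreover have "L2_inner \<Omega> (Ak k) (\<lambda>x. - \<phi> x) = - L2_inner \<Omega> (Ak k) \<phi>" by (rule L2_inner_minus_right)
    ultimately show "- L2_inner \<Omega> (Ak k) \<phi> \<le> \<epsilon> k * L2_norm \<Omega> \<phi>"
      by (simp add: L2_norm_def)
  next
    fix k m assume m: "m \<in> L2 \<Omega>" "AE x in M \<Omega>. 0 \<le> m x \<and> m x \<le> u k x - \<alpha> x - ea k x"
    have "L2_inner \<Omega> (Yk k) (\<lambda>x. 0) + L2_inner \<Omega> (Jk k) (\<lambda>x. 0) + L2_inner \<Omega> (Ak k) m + L2_inner \<Omega> (Bk k) (\<lambda>x. 0) + L2_inner \<Omega> (Uk k) (\<lambda>x. 0)
     \<le> \<epsilon> k * sqrt (L2_inner \<Omega> (\<lambda>x. 0) (\<lambda>x. 0) + L2_inner \<Omega> (\<lambda>x. 0) (\<lambda>x. 0) + L2_inner \<Omega> m m + L2_inner \<Omega> (\<lambda>x. 0) (\<lambda>x. 0) + L2_inner \<Omega> (\<lambda>x. 0) (\<lambda>x. 0))"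
    proof (rule dir)
      fix t :: real assume t: "0 < t" "t \<le> 1"
      have "AE x in M \<Omega>. \<alpha> x + (ea k x + t * m x) \<le> u k x \<and> u k x \<le> \<beta> x + ebb k x"
        using ukc[of k] m(2)
      proof eventually_elim
        case (elim x)
        have "t * m x \<le> m x" using t elim by (intro mult_left_le_one_le) auto
        then show ?case using elim by linarith
      qed
      then show "((\<lambda>x. ey k x + t * 0, \<lambda>x. eJ k x + t * 0, \<lambda>x. ea k x + t * m x, \<lambda>x. ebb k x + t * 0), \<lambda>x. u k x + t * 0)
          \<in> gph \<Omega> (Gmap \<Omega> \<alpha> \<beta> Q)"
        using ekL ukQ m(1) by (simp add: S_mem L2_add L2_scale)
    qed
    then show "L2_inner \<Omega> (Ak k) m \<le> \<epsilon> k * L2_norm \<Omega> m" by (simp add: L2_norm_def)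
  next
    fix k show "(\<lambda>x. u k x - \<alpha> x - ea k x) \<in> borel_measurable (M \<Omega>)"
      using ekL L2_meas \<alpha>m by (intro borel_measurable_diff) blast+
  next
    fix k show "AE x in M \<Omega>. u k x - \<alpha> x - ea k x \<ge> 0" using ukc[of k] by eventually_elim simp
  next
    show "(\<lambda>x. ubar x - \<alpha> x - ea0 x) \<in> borel_measurable (M \<Omega>)"
      using ubL e0L L2_meas \<alpha>m by (intro borel_measurable_diff) blast+
  next
    show "AE x in M \<Omega>. ubar x - \<alpha> x - ea0 x \<ge> 0" using ubc by eventually_elim simp
  next
    fix k
    have "(\<lambda>x. ubar x - \<alpha> x - ea0 x - (u k x - \<alpha> x - ea k x)) = (\<lambda>x. (ea k x - ea0 x) - (u k x - ubar x))"
      by auto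
    moreover have "(\<lambda>x. (ea k x - ea0 x) - (u k x - ubar x)) \<in> L2 \<Omega>"
      using ekL e0L ubL by (intro L2_diff) auto
    ultimately show "(\<lambda>x. ubar x - \<alpha> x - ea0 x - (u k x - \<alpha> x - ea k x)) \<in> L2 \<Omega>" by simp
  next
    have eq: "(\<lambda>x. ubar x - \<alpha> x - ea0 x - (u k x - \<alpha> x - ea k x)) = (\<lambda>x. (ea k x - ea0 x) - (u k x - ubar x))" for k
      by auto
    have lim2: "(\<lambda>k. L2_norm \<Omega> (\<lambda>x. ea k x - ea0 x) + L2_norm \<Omega> (\<lambda>x. u k x - ubar x)) \<longlonglongrightarrow> 0"
      using tendsto_add[OF nA nU] by simp
    show "(\<lambda>k. L2_norm \<Omega> (\<lambda>x. ubar x - \<alpha> x - ea0 x - (u k x - \<alpha> x - ea k x))) \<longlonglongrightarrow> 0"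
      unfolding eq
    proof (rule tendsto_sandwich[OF _ _ tendsto_const lim2])
      show "\<forall>\<^sub>F k in sequentially. 0 \<le> L2_norm \<Omega> (\<lambda>x. ea k x - ea0 x - (u k x - ubar x))"
        by (simp add: L2_norm_nonneg)
      show "\<forall>\<^sub>F k in sequentially. L2_norm \<Omega> (\<lambda>x. ea k x - ea0 x - (u k x - ubar x))
          \<le> L2_norm \<Omega> (\<lambda>x. ea k x - ea0 x) + L2_norm \<Omega> (\<lambda>x. u k x - ubar x)"
        by (intro always_eventually allI L2_norm_diff_le L2_diff ekL e0L ubL)
    qed
  qed
  have wmB: "(\<lambda>k. L2_inner \<Omega> (\<lambda>x. - Bk k x) h) \<longlonglongrightarrow> L2_inner \<Omega> (\<lambda>x. - B x) h" if "h \<in> L2 \<Omega>" for h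
    unfolding L2_inner_minus_left by (intro tendsto_intros wB that)
  have cB: "AE x in M \<Omega>. - B x \<ge> 0 \<and> (\<beta> x + eb0 x - ubar x > 0 \<longrightarrow> - B x = 0)"
  proof (rule cone_lim[where \<phi>k = "\<lambda>k x. \<beta> x + ebb k x - u k x" and \<phi>b = "\<lambda>x. \<beta> x + eb0 x - ubar x",
        OF L2_uminus[OF pskL(4)] L2_uminus[OF psL(4)] wmB eps eps0])
    fix k \<phi> assume \<phi>: "\<phi> \<in> L2 \<Omega>" "AE x in M \<Omega>. \<phi> x \<ge> 0"
    have "L2_inner \<Omega> (Yk k) (\<lambda>x. 0) + L2_inner \<Omega> (Jk k) (\<lambda>x. 0) + L2_inner \<Omega> (Ak k) (\<lambda>x. 0) + L2_inner \<Omega> (Bk k) \<phi> + L2_inner \<Omega> (Uk k) (\<lambda>x. 0)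
     \<le> \<epsilon> k * sqrt (L2_inner \<Omega> (\<lambda>x. 0) (\<lambda>x. 0) + L2_inner \<Omega> (\<lambda>x. 0) (\<lambda>x. 0) + L2_inner \<Omega> (\<lambda>x. 0) (\<lambda>x. 0) + L2_inner \<Omega> \<phi> \<phi> + L2_inner \<Omega> (\<lambda>x. 0) (\<lambda>x. 0))"
    proof (rule dir)
      fix t :: real assume t: "0 < t" "t \<le> 1"
      have "AE x in M \<Omega>. \<alpha> x + ea k x \<le> u k x \<and> u k x \<le> \<beta> x + (ebb k x + t * \<phi> x)"
        using ukc[of k] \<phi>(2)
      proof eventually_elim
        case (elim x)
        have "0 \<le> t * \<phi> x" using elim t by simp
        then show ?case using elim by linarith
      qed
      then show "((\<lambda>x. ey k x + t * 0, \<lambda>x. eJ k x + t * 0, \<lambda>x. ea k x + t * 0, \<lambda>x. ebb k x + t * \<phi> x), \<lambda>x. u k x + t * 0)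
          \<in> gph \<Omega> (Gmap \<Omega> \<alpha> \<beta> Q)"
        using ekL ukQ \<phi>(1) by (simp add: S_mem L2_add L2_scale)
    qed
    then show "- L2_inner \<Omega> (\<lambda>x. - Bk k x) \<phi> \<le> \<epsilon> k * L2_norm \<Omega> \<phi>"
      by (simp add: L2_norm_def L2_inner_minus_left)
  next
    fix k m assume m: "m \<in> L2 \<Omega>" "AE x in M \<Omega>. 0 \<le> m x \<and> m x \<le> \<beta> x + ebb k x - u k x"
    have "L2_inner \<Omega> (Yk k) (\<lambda>x. 0) + L2_inner \<Omega> (Jk k) (\<lambda>x. 0) + L2_inner \<Omega> (Ak k) (\<lambda>x. 0) + L2_inner \<Omega> (Bk k) (\<lambda>x. - m x) + L2_inner \<Omega> (Uk k) (\<lambda>x. 0)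
     \<le> \<epsilon> k * sqrt (L2_inner \<Omega> (\<lambda>x. 0) (\<lambda>x. 0) + L2_inner \<Omega> (\<lambda>x. 0) (\<lambda>x. 0) + L2_inner \<Omega> (\<lambda>x. 0) (\<lambda>x. 0) + L2_inner \<Omega> (\<lambda>x. - m x) (\<lambda>x. - m x) + L2_inner \<Omega> (\<lambda>x. 0) (\<lambda>x. 0))"
    proof (rule dir)
      fix t :: real assume t: "0 < t" "t \<le> 1"
      have "AE x in M \<Omega>. \<alpha> x + ea k x \<le> u k x \<and> u k x \<le> \<beta> x + (ebb k x + t * - m x)"
        using ukc[of k] m(2)
      proof eventually_elim
        case (elim x)
        have "t * m x \<le> m x" using t elim by (intro mult_left_le_one_le) auto
        then show ?case using elim by linarith
      qed
      then show "((\<lambda>x. ey k x + t * 0, \<lambda>x. eJ k x + t * 0, \<lambda>x. ea k x + t * 0, \<lambda>x. ebb k x + t * - m x), \<lambda>x. u k x + t * 0)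
          \<in> gph \<Omega> (Gmap \<Omega> \<alpha> \<beta> Q)"
        using ekL ukQ m(1) by (simp add: S_mem L2_add L2_scale L2_uminus L2_diff)
    qed
    moreover have "L2_inner \<Omega> (\<lambda>x. - m x) (\<lambda>x. - m x) = L2_inner \<Omega> m m" by (rule normneg)
    moreover have "L2_inner \<Omega> (Bk k) (\<lambda>x. - m x) = L2_inner \<Omega> (\<lambda>x. - Bk k x) m"
      by (simp add: L2_inner_def)
    ultimately show "L2_inner \<Omega> (\<lambda>x. - Bk k x) m \<le> \<epsilon> k * L2_norm \<Omega> m"
      by (simp add: L2_norm_def)
  next
    fix k show "(\<lambda>x. \<beta> x + ebb k x - u k x) \<in> borel_measurable (M \<Omega>)"
      using ekL L2_meas \<beta>m by (intro borel_measurable_diff borel_measurable_add) blast+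
  next
    fix k show "AE x in M \<Omega>. \<beta> x + ebb k x - u k x \<ge> 0" using ukc[of k] by eventually_elim simp
  next
    show "(\<lambda>x. \<beta> x + eb0 x - ubar x) \<in> borel_measurable (M \<Omega>)"
      using ubL e0L L2_meas \<beta>m by (intro borel_measurable_diff borel_measurable_add) blast+
  next
    show "AE x in M \<Omega>. \<beta> x + eb0 x - ubar x \<ge> 0" using ubc by eventually_elim simp
  next
    fix k
    have "(\<lambda>x. \<beta> x + eb0 x - ubar x - (\<beta> x + ebb k x - u k x)) = (\<lambda>x. (u k x - ubar x) - (ebb k x - eb0 x))"
      by auto
    moreover have "(\<lambda>x. (u k x - ubar x) - (ebb k x - eb0 x)) \<in> L2 \<Omega>"
      using ekL e0L ubL by (intro L2_diff) auto
    ultimately show "(\<lambda>x. \<beta> x + eb0 x - ubar x - (\<beta> x + ebb k x - u k x)) \<in> L2 \<Omega>" by simp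
  next
    have eq: "(\<lambda>x. \<beta> x + eb0 x - ubar x - (\<beta> x + ebb k x - u k x)) = (\<lambda>x. (u k x - ubar x) - (ebb k x - eb0 x))" for k
      by auto
    have lim2: "(\<lambda>k. L2_norm \<Omega> (\<lambda>x. u k x - ubar x) + L2_norm \<Omega> (\<lambda>x. ebb k x - eb0 x)) \<longlonglongrightarrow> 0"
      using tendsto_add[OF nU nB] by simp
    show "(\<lambda>k. L2_norm \<Omega> (\<lambda>x. \<beta> x + eb0 x - ubar x - (\<beta> x + ebb k x - u k x))) \<longlonglongrightarrow> 0"
      unfolding eq
    proof (rule tendsto_sandwich[OF _ _ tendsto_const lim2])
      show "\<forall>\<^sub>F k in sequentially. 0 \<le> L2_norm \<Omega> (\<lambda>x. u k x - ubar x - (ebb k x - eb0 x))"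
        by (simp add: L2_norm_nonneg)
      show "\<forall>\<^sub>F k in sequentially. L2_norm \<Omega> (\<lambda>x. u k x - ubar x - (ebb k x - eb0 x))
          \<le> L2_norm \<Omega> (\<lambda>x. u k x - ubar x) + L2_norm \<Omega> (\<lambda>x. ebb k x - eb0 x)"
        by (intro always_eventually allI L2_norm_diff_le L2_diff ekL e0L ubL)
    qed
  qed
  define w where "w k x = Ak k x + Bk k x + Uk k x" for k x
  define W where "W x = A x + B x + - us x" for x
  have wL: "w k \<in> L2 \<Omega>" for k unfolding w_def by (intro L2_add pskL)
  have WL: "W \<in> L2 \<Omega>" unfolding W_def by (intro L2_add psL)
  have winner: "L2_inner \<Omega> (w k) h = L2_inner \<Omega> (Ak k) h + L2_inner \<Omega> (Bk k) h + L2_inner \<Omega> (Uk k) h"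
    if "h \<in> L2 \<Omega>" for k h
    unfolding w_def using pskL that by (simp add: L2_inner_add_left L2_add)
  have Winner: "L2_inner \<Omega> W h = L2_inner \<Omega> A h + L2_inner \<Omega> B h + L2_inner \<Omega> (\<lambda>x. - us x) h"
    if "h \<in> L2 \<Omega>" for h
  proof -
    have "L2_inner \<Omega> W h = L2_inner \<Omega> (\<lambda>x. A x + B x) h + L2_inner \<Omega> (\<lambda>x. - us x) h"
      unfolding W_def by (rule L2_inner_add_left[OF that L2_add[OF psL(3) psL(4)] psL(5)])
    also have "L2_inner \<Omega> (\<lambda>x. A x + B x) h = L2_inner \<Omega> A h + L2_inner \<Omega> B h"
      by (rule L2_inner_add_left[OF that psL(3) psL(4)])
    finally show ?thesis .
  qed
  have wW: "(\<lambda>k. L2_inner \<Omega> (w k) h) \<longlonglongrightarrow> L2_inner \<Omega> W h" if "h \<in> L2 \<Omega>" for h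
    using wABU[OF that] by (simp add: winner[OF that] Winner[OF that])
  obtain CC where CC: "\<And>q. q \<in> Q \<Longrightarrow> L2_norm \<Omega> q \<le> CC" using Qb by (auto simp: L2_bounded_def)
  obtain c r where cL: "c \<in> L2 \<Omega>" and r: "r > 0"
    and ball: "\<And>v. v \<in> L2 \<Omega> \<Longrightarrow> L2_norm \<Omega> (\<lambda>x. v x - c x) < r \<Longrightarrow> v \<in> Q"
    using CQ by (auto simp: L2_interior_def)
  have eps3: "(\<lambda>k. sqrt 3 * \<epsilon> k) \<longlonglongrightarrow> 0" using tendsto_mult_right_zero[OF eps, of "sqrt 3"] by simp
  have WN: "L2_inner \<Omega> W (\<lambda>x. q x - ubar x) \<le> 0" if q: "q \<in> Q" for q
  proof (rule qpart[OF wL WL wW eps3 _ ukQ ubQ QL2 nU _ CC cL r ball q])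
    fix k show "0 \<le> sqrt 3 * \<epsilon> k" using eps0[of k] by simp
  next
    fix k q assume q: "q \<in> Q"
    have qL: "q \<in> L2 \<Omega>" using q QL2 by blast
    define h where "h x = q x - u k x" for x
    have hL: "h \<in> L2 \<Omega>" unfolding h_def by (intro L2_diff qL ekL)
    have "L2_inner \<Omega> (Yk k) (\<lambda>x. 0) + L2_inner \<Omega> (Jk k) (\<lambda>x. 0) + L2_inner \<Omega> (Ak k) h + L2_inner \<Omega> (Bk k) h + L2_inner \<Omega> (Uk k) h
     \<le> \<epsilon> k * sqrt (L2_inner \<Omega> (\<lambda>x. 0) (\<lambda>x. 0) + L2_inner \<Omega> (\<lambda>x. 0) (\<lambda>x. 0) + L2_inner \<Omega> h h + L2_inner \<Omega> h h + L2_inner \<Omega> h h)"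
    proof (rule dir)
      fix t :: real assume t: "0 < t" "t \<le> 1"
      have "AE x in M \<Omega>. \<alpha> x + (ea k x + t * h x) \<le> u k x + t * h x \<and> u k x + t * h x \<le> \<beta> x + (ebb k x + t * h x)"
        using ukc[of k] by eventually_elim simp
      moreover have "(\<lambda>x. u k x + t * h x) \<in> Q"
      proof -
        have "(\<lambda>x. (1 - t) * u k x + t * q x) \<in> Q" using Qc ukQ[of k] q t by (simp add: L2_convex_def)
        moreover have "(\<lambda>x. (1 - t) * u k x + t * q x) = (\<lambda>x. u k x + t * h x)"
          by (auto simp: h_def algebra_simps)
        ultimately show ?thesis by simp
      qed
      ultimately show "((\<lambda>x. ey k x + t * 0, \<lambda>x. eJ k x + t * 0, \<lambda>x. ea k x + t * h x, \<lambda>x. ebb k x + t * h x), \<lambda>x. u k x + t * h x)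
          \<in> gph \<Omega> (Gmap \<Omega> \<alpha> \<beta> Q)"
        using ekL hL by (simp add: S_mem L2_add L2_scale)
    qed
    moreover have "sqrt (L2_inner \<Omega> h h + L2_inner \<Omega> h h + L2_inner \<Omega> h h) = sqrt 3 * L2_norm \<Omega> h"
      by (simp add: L2_norm_def real_sqrt_mult[symmetric])
    ultimately have "L2_inner \<Omega> (Ak k) h + L2_inner \<Omega> (Bk k) h + L2_inner \<Omega> (Uk k) h \<le> \<epsilon> k * (sqrt 3 * L2_norm \<Omega> h)"
      by simp
    then show "L2_inner \<Omega> (w k) (\<lambda>x. q x - u k x) \<le> sqrt 3 * \<epsilon> k * L2_norm \<Omega> (\<lambda>x. q x - u k x)"
      using winner[OF hL, of k] by (simp add: h_def[abs_def] algebra_simps)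
  qed
  have u2N: "W \<in> conv_normal \<Omega> ubar Q"
    using WN WL ubQ by (simp add: conv_normal_def)
  have u1L: "(\<lambda>x. A x + B x) \<in> L2 \<Omega>" by (intro L2_add psL)
  have Espace_es: "(Y, J, A, B) \<in> Espace \<Omega>" using gs by (simp add: gspace_def)
  have O1a: "AE x in M \<Omega>. x \<in> Omega1 \<Omega> \<alpha> ebar ubar \<longrightarrow> A x \<ge> 0" using cA by eventually_elim simp
  have O1b: "AE x in M \<Omega>. x \<notin> Omega1 \<Omega> \<alpha> ebar ubar \<longrightarrow> A x = 0"
    using cA ubc AE_space[of "M \<Omega>"]
  proof eventually_elim
    case (elim x)
    show ?case
    proof
      assume "x \<notin> Omega1 \<Omega> \<alpha> ebar ubar"
      then have "ubar x \<noteq> \<alpha> x + ea0 x" using elim by (auto simp: Omega1_def eb)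
      then have "ubar x - \<alpha> x - ea0 x > 0" using elim by auto
      then show "A x = 0" using elim by auto
    qed
  qed
  have O3a: "AE x in M \<Omega>. x \<in> Omega3 \<Omega> \<beta> ebar ubar \<longrightarrow> B x \<le> 0" using cB by eventually_elim simp
  have O3b: "AE x in M \<Omega>. x \<notin> Omega3 \<Omega> \<beta> ebar ubar \<longrightarrow> B x = 0"
    using cB ubc AE_space[of "M \<Omega>"]
  proof eventually_elim
    case (elim x)
    show ?case
    proof
      assume "x \<notin> Omega3 \<Omega> \<beta> ebar ubar"
      then have "ubar x \<noteq> \<beta> x + eb0 x" using elim by (auto simp: Omega3_def eb)
      then have "\<beta> x + eb0 x - ubar x > 0" using elim by auto
      then show "B x = 0" using elim by auto
    qed
  qed
  have ex: "\<exists>u1 u2. u1 \<in> L2 \<Omega> \<and> u2 \<in> conv_normal \<Omega> ubar Q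
                      \<and> (AE x in M \<Omega>. us x = u1 x - u2 x)
                      \<and> (AE x in M \<Omega>. u1 x = A x + B x)"
    by (rule exI[of _ "\<lambda>x. A x + B x"], rule exI[of _ W]) (use u1L u2N in \<open>simp add: W_def\<close>)
  show ?thesis
    unfolding esd Rset_def using Espace_es Y0 J0 ex O1a O1b O3a O3b by simp
qed

theorem proposition3p5:
  fixes \<Omega> :: "'a::euclidean_space set"
    and \<alpha> \<beta> \<zeta> :: "'a \<Rightarrow> real"
    and a :: "'a \<Rightarrow> 'a \<Rightarrow> 'a \<Rightarrow> real"
    and f L :: "'a \<Rightarrow> real \<Rightarrow> real"
    and Q :: "('a \<Rightarrow> real) set"
    and pbar :: real
    and ebar :: "'a pert"
    and ubar us :: "'a \<Rightarrow> real"
  assumes dim: "DIM('a) \<in> {1, 2, 3}"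
    and \<alpha>: "\<alpha> \<in> Linf \<Omega>" and \<beta>: "\<beta> \<in> Linf \<Omega>"
    and \<alpha>\<beta>: "AE x in M \<Omega>. \<alpha> x \<le> \<beta> x" and \<alpha>\<beta>_ne: "\<not> (AE x in M \<Omega>. \<alpha> x = \<beta> x)"
    and \<zeta>: "\<zeta> \<in> L2 \<Omega>" "AE x in M \<Omega>. \<zeta> x \<ge> 0"
    \<comment> \<open>Caratheodory, C^2 in y\<close>
    and f_meas: "\<forall>y. (\<lambda>x. f x y) \<in> borel_measurable (M \<Omega>)"
    and L_meas: "\<forall>y. (\<lambda>x. L x y) \<in> borel_measurable (M \<Omega>)"
    and f_C2: "AE x in M \<Omega>. (\<forall>y. (f x has_real_derivative deriv (f x) y) (at y)
                  \<and> (deriv (f x) has_real_derivative deriv (deriv (f x)) y) (at y))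
                  \<and> continuous_on UNIV (deriv (deriv (f x)))"
    and L_C2: "AE x in M \<Omega>. (\<forall>y. (L x has_real_derivative deriv (L x) y) (at y)
                  \<and> (deriv (L x) has_real_derivative deriv (deriv (L x)) y) (at y))
                  \<and> continuous_on UNIV (deriv (deriv (L x)))"
    \<comment> \<open>(A1)\<close>
    and pbar: "pbar > real DIM('a) / 2"
    and A1_0: "(\<lambda>x. f x 0) \<in> Lp pbar \<Omega>"
    and A1_mono: "AE x in M \<Omega>. \<forall>y. deriv (f x) y \<ge> 0"
    and A1_bd: "\<forall>Mb. \<exists>C. AE x in M \<Omega>. \<forall>y. \<bar>y\<bar> \<le> Mb \<longrightarrow>
                  \<bar>deriv (f x) y\<bar> + \<bar>deriv (deriv (f x)) y\<bar> \<le> C"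
    and A1_uc: "\<forall>Mb. \<forall>\<epsilon>>0. \<exists>\<delta>>0. AE x in M \<Omega>. \<forall>y1 y2. \<bar>y1\<bar> \<le> Mb \<longrightarrow> \<bar>y2\<bar> \<le> Mb \<longrightarrow>
                  \<bar>y1 - y2\<bar> < \<delta> \<longrightarrow> \<bar>deriv (deriv (f x)) y1 - deriv (deriv (f x)) y2\<bar> < \<epsilon>"
    \<comment> \<open>(A2)\<close>
    and A2_0: "integrable (M \<Omega>) (\<lambda>x. L x 0)"
    and A2_bd1: "\<forall>Mb. \<exists>\<psi> \<in> Lp pbar \<Omega>. AE x in M \<Omega>. \<forall>y. \<bar>y\<bar> \<le> Mb \<longrightarrow> \<bar>deriv (L x) y\<bar> \<le> \<psi> x"
    and A2_bd2: "\<forall>Mb. \<exists>C. AE x in M \<Omega>. \<forall>y. \<bar>y\<bar> \<le> Mb \<longrightarrow> \<bar>deriv (deriv (L x)) y\<bar> \<le> C"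
    and A2_uc: "\<forall>Mb. \<forall>\<epsilon>>0. \<exists>\<delta>>0. AE x in M \<Omega>. \<forall>y1 y2. \<bar>y1\<bar> \<le> Mb \<longrightarrow> \<bar>y2\<bar> \<le> Mb \<longrightarrow>
                  \<bar>y1 - y2\<bar> < \<delta> \<longrightarrow> \<bar>deriv (deriv (L x)) y1 - deriv (deriv (L x)) y2\<bar> < \<epsilon>"
    \<comment> \<open>(A3)\<close>
    and \<Omega>: "open \<Omega>" "bounded \<Omega>" "lipschitz_boundary \<Omega>"
    and Q: "Q \<subseteq> L2 \<Omega>" "L2_closed \<Omega> Q" "L2_convex Q" "L2_bounded \<Omega> Q"
    and CQ: "\<exists>e \<in> Espace \<Omega>. Uad \<Omega> \<alpha> \<beta> e \<inter> L2_interior \<Omega> Q \<noteq> {}"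
    and a_cont: "\<forall>i\<in>Basis. \<forall>j\<in>Basis. continuous_on (closure \<Omega>) (a i j)"
    and a_ell: "\<exists>\<Lambda>>0. \<forall>x\<in>closure \<Omega>. \<forall>\<xi>.
                  (\<Sum>i\<in>Basis. \<Sum>j\<in>Basis. a i j x * (\<xi> \<bullet> i) * (\<xi> \<bullet> j)) \<ge> \<Lambda> * (norm \<xi>)\<^sup>2"
    \<comment> \<open>the point\<close>
    and ebar: "ebar \<in> Espace \<Omega>"
    and ubar: "ubar \<in> Sol \<Omega> a f L \<zeta> \<alpha> \<beta> Q ebar"
    and us: "us \<in> L2 \<Omega>"
  shows "limiting_coderiv \<Omega> (Gmap \<Omega> \<alpha> \<beta> Q) ebar ubar us
           = regular_coderiv \<Omega> (Gmap \<Omega> \<alpha> \<beta> Q) ebar ubar us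
       \<and> regular_coderiv \<Omega> (Gmap \<Omega> \<alpha> \<beta> Q) ebar ubar us
           = {(esy, esJ, esa, esb). (esy, esJ, esa, esb) \<in> Espace \<Omega>
                \<and> (AE x in M \<Omega>. esy x = 0) \<and> (AE x in M \<Omega>. esJ x = 0)
                \<and> (\<exists>u1 u2. u1 \<in> L2 \<Omega> \<and> u2 \<in> conv_normal \<Omega> ubar Q
                      \<and> (AE x in M \<Omega>. us x = u1 x - u2 x)
                      \<and> (AE x in M \<Omega>. u1 x = esa x + esb x))
                \<and> (AE x in M \<Omega>. x \<in> Omega1 \<Omega> \<alpha> ebar ubar \<longrightarrow> esa x \<ge> 0)
                \<and> (AE x in M \<Omega>. x \<notin> Omega1 \<Omega> \<alpha> ebar ubar \<longrightarrow> esa x = 0)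
                \<and> (AE x in M \<Omega>. x \<in> Omega3 \<Omega> \<beta> ebar ubar \<longrightarrow> esb x \<le> 0)
                \<and> (AE x in M \<Omega>. x \<notin> Omega3 \<Omega> \<beta> ebar ubar \<longrightarrow> esb x = 0)}"
proof -
  obtain ey0 eJ0 ea0 eb0 where eb: "ebar = (ey0, eJ0, ea0, eb0)" by (metis prod.collapse)
  have ubG: "ubar \<in> Gmap \<Omega> \<alpha> \<beta> Q ebar" using ubar by (simp add: Sol_def)
  have pS: "(ebar, ubar) \<in> gph \<Omega> (Gmap \<Omega> \<alpha> \<beta> Q)" using ebar ubG by (simp add: gph_def)
  have \<alpha>m: "\<alpha> \<in> borel_measurable (M \<Omega>)" using \<alpha> by (simp add: Linf_def)
  have \<beta>m: "\<beta> \<in> borel_measurable (M \<Omega>)" using \<beta> by (simp add: Linf_def)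
  have L: "limiting_coderiv \<Omega> (Gmap \<Omega> \<alpha> \<beta> Q) ebar ubar us \<subseteq> Rset \<Omega> \<alpha> \<beta> Q ebar ubar us"
    using limiting_sub_R[OF eb ebar ubG \<alpha>m \<beta>m Q(1) Q(3) Q(4) CQ] by blast
  have Rr: "Rset \<Omega> \<alpha> \<beta> Q ebar ubar us \<subseteq> regular_coderiv \<Omega> (Gmap \<Omega> \<alpha> \<beta> Q) ebar ubar us"
    using R_sub_regular[OF eb ebar ubG us] by blast
  have rl: "regular_coderiv \<Omega> (Gmap \<Omega> \<alpha> \<beta> Q) ebar ubar us \<subseteq> limiting_coderiv \<Omega> (Gmap \<Omega> \<alpha> \<beta> Q) ebar ubar us"
    using regular_sub_limiting[OF pS] by blast
  have E1: "limiting_coderiv \<Omega> (Gmap \<Omega> \<alpha> \<beta> Q) ebar ubar us = regular_coderiv \<Omega> (Gmap \<Omega> \<alpha> \<beta> Q) ebar ubar us"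
    using L Rr rl by blast
  have E2: "regular_coderiv \<Omega> (Gmap \<Omega> \<alpha> \<beta> Q) ebar ubar us = Rset \<Omega> \<alpha> \<beta> Q ebar ubar us"
    using L Rr rl by blast
  show ?thesis by (rule conjI[OF E1 E2[unfolded Rset_def]])
qed

end
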